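(* Every reduced triangle in the hyperbolic plane $\mathbb{H}^2$ is a regular triangle (i.e., the only reduced hyperbolic triangles are the regular ones).
   Context: A convex body in $\mathbb{H}^2$ is a compact convex set with nonempty interior. For a line $H$ supporting a convex body $C$, $\mathrm{width}_H(C)$ is the distance between $H$ and a farthest line ultraparallel to $H$ supporting $C$; the thickness $\Delta(C)$ is the minimum of $\mathrm{width}_H(C)$ over supporting lines $H$. A convex body $R$ is reduced if $\Delta(Z)<\Delta(R)$ for every convex body $Z$ properly contained in $R$. A regular triangle is one with all three sides of equal length. *)

theory Defs
  imports "HOL-Analysis.Analysis"
begin

text \<open>The hyperbolic plane in the Beltrami--Klein model: the open unit disk of
the complex plane (viewed as the Euclidean plane). In this model hyperbolic
lines are the nonempty intersections of Euclidean lines with the disk, hyperbolic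
geodesic segments are Euclidean segments, hence hyperbolic convexity is Euclidean
convexity, and the hyperbolic topology is the Euclidean one.\<close>

definition H2 :: "complex set" where
  "H2 = ball 0 1"

definition hdist :: "complex \<Rightarrow> complex \<Rightarrow> real" where
  "hdist p q = arcosh ((1 - inner p q) / sqrt ((1 - (norm p)\<^sup>2) * (1 - (norm q)\<^sup>2)))"

definition hsetdist :: "complex set \<Rightarrow> complex set \<Rightarrow> real" where
  "hsetdist A B = (INF p\<in>A. INF q\<in>B. hdist p q)"

definition hline :: "complex set \<Rightarrow> bool" where
  "hline L \<longleftrightarrow> (\<exists>a b. a \<in> H2 \<and> b \<in> H2 \<and> a \<noteq> b \<and> L = affine hull {a, b} \<inter> H2)"

text \<open>Two hyperbolic lines are ultraparallel iff they neither meet in the plane nor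
at an ideal point, i.e. their chords have disjoint Euclidean closures.\<close>
definition ultraparallel :: "complex set \<Rightarrow> complex set \<Rightarrow> bool" where
  "ultraparallel L M \<longleftrightarrow> hline L \<and> hline M \<and> closure L \<inter> closure M = {}"

definition convex_body :: "complex set \<Rightarrow> bool" where
  "convex_body C \<longleftrightarrow> C \<subseteq> H2 \<and> compact C \<and> convex C \<and> interior C \<noteq> {}"

definition supporting :: "complex set \<Rightarrow> complex set \<Rightarrow> bool" where
  "supporting H C \<longleftrightarrow> hline H \<and> H \<inter> C \<noteq> {} \<and>
     (\<exists>u c. u \<noteq> 0 \<and> H = {x \<in> H2. inner u x = c} \<and> (\<forall>x\<in>C. inner u x \<le> c))"

definition hwidth :: "complex set \<Rightarrow> complex set \<Rightarrow> real" where
  "hwidth H C = (SUP H'\<in>{H'. supporting H' C \<and> ultraparallel H H'}. hsetdist H H')"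

definition thickness :: "complex set \<Rightarrow> real" where
  "thickness C = (INF H\<in>{H. supporting H C}. hwidth H C)"

definition reduced :: "complex set \<Rightarrow> bool" where
  "reduced R \<longleftrightarrow> convex_body R \<and>
     (\<forall>Z. convex_body Z \<and> Z \<subset> R \<longrightarrow> thickness Z < thickness R)"

text \<open>Hyperbolic triangle with vertices a b c (geodesic convex hull = Euclidean
convex hull in the Klein model).\<close>
definition htriangle :: "complex \<Rightarrow> complex \<Rightarrow> complex \<Rightarrow> bool" where
  "htriangle a b c \<longleftrightarrow> a \<in> H2 \<and> b \<in> H2 \<and> c \<in> H2 \<and> \<not> collinear {a, b, c}"

definition regular_triangle :: "complex \<Rightarrow> complex \<Rightarrow> complex \<Rightarrow> bool" where
  "regular_triangle a b c \<longleftrightarrow> hdist a b = hdist b c \<and> hdist b c = hdist c a"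

end

theory Submission
  imports Defs
begin

datatype v3 = V3 (t0: real) (t1: real) (t2: real)

definition lip :: "v3 \<Rightarrow> v3 \<Rightarrow> real" where
  "lip X Y = - t0 X * t0 Y + t1 X * t1 Y + t2 X * t2 Y"
definition vadd :: "v3 \<Rightarrow> v3 \<Rightarrow> v3" where
  "vadd X Y = V3 (t0 X + t0 Y) (t1 X + t1 Y) (t2 X + t2 Y)"
definition vsc :: "real \<Rightarrow> v3 \<Rightarrow> v3" where
  "vsc r X = V3 (r * t0 X) (r * t1 X) (r * t2 X)"
definition det3 :: "v3 \<Rightarrow> v3 \<Rightarrow> v3 \<Rightarrow> real" where
  "det3 X Y Z = t0 X * (t1 Y * t2 Z - t2 Y * t1 Z) - t1 X * (t0 Y * t2 Z - t2 Y * t0 Z)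
     + t2 X * (t0 Y * t1 Z - t1 Y * t0 Z)"
definition cr :: "v3 \<Rightarrow> v3 \<Rightarrow> v3" where
  "cr Y Z = V3 (-(t1 Y * t2 Z - t2 Y * t1 Z)) (-(t0 Y * t2 Z - t2 Y * t0 Z)) (t0 Y * t1 Z - t1 Y * t0 Z)"

lemma lip_cr: "lip X (cr Y Z) = det3 X Y Z"
  by (simp add: lip_def cr_def det3_def algebra_simps)
lemma lip_cr_cr: "lip (cr Y Z) (cr Y Z) = (lip Y Z) ^ 2 - lip Y Y * lip Z Z"
  by (simp add: lip_def cr_def power2_eq_square algebra_simps)
lemma gram: "lip X X * (lip Y Y * lip Z Z - lip Y Z * lip Y Z) - lip X Y * (lip X Y * lip Z Z - lip Y Z * lip X Z)
   + lip X Z * (lip X Y * lip Y Z - lip Y Y * lip X Z) = - ((det3 X Y Z) ^ 2)"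
  unfolding lip_def det3_def power2_eq_square by algebra
lemma cramer: "vadd (vadd (vsc (lip E X) (cr Y Z)) (vsc (lip E Y) (cr Z X))) (vsc (lip E Z) (cr X Y)) = vsc (det3 X Y Z) E"
  by (simp add: lip_def cr_def det3_def vadd_def vsc_def algebra_simps)
definition rr :: "complex \<Rightarrow> real" where "rr x = sqrt (1 - (Re x)^2 - (Im x)^2)"
definition kl :: "complex \<Rightarrow> v3" where "kl x = V3 (1 / rr x) (Re x / rr x) (Im x / rr x)"
definition klein :: "v3 \<Rightarrow> complex" where "klein V = Complex (t1 V / t0 V) (t2 V / t0 V)"
definition nrm :: "complex \<Rightarrow> real \<Rightarrow> v3" where "nrm u c = V3 c (Re u) (Im u)"

lemma H2_iff: "x \<in> H2 \<longleftrightarrow> (Re x)^2 + (Im x)^2 < 1"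
proof -
  have "x \<in> H2 \<longleftrightarrow> (cmod x)^2 < 1"
    by (simp add: H2_def abs_square_less_1)
  then show ?thesis by (simp add: cmod_power2)
qed

lemma rr_pos: "x \<in> H2 \<Longrightarrow> rr x > 0"
  by (simp add: rr_def H2_iff)

lemma rr_sq: "x \<in> H2 \<Longrightarrow> (rr x)^2 = 1 - (Re x)^2 - (Im x)^2"
  by (simp add: rr_def H2_iff)

lemma lip_kl: assumes "x \<in> H2" "y \<in> H2"
  shows "lip (kl x) (kl y) = - (1 - inner x y) / (rr x * rr y)"
  using rr_pos[OF assms(1)] rr_pos[OF assms(2)]
  by (simp add: lip_def kl_def inner_complex_def field_simps)

lemma lip_kl_self: assumes "x \<in> H2" shows "lip (kl x) (kl x) = -1"
proof -
  have r: "rr x > 0" using rr_pos[OF assms] .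
  have "lip (kl x) (kl x) * (rr x)^2 = - (1 - (Re x)^2 - (Im x)^2)"
    using r by (simp add: lip_def kl_def field_simps power2_eq_square)
  also have "\<dots> = - ((rr x)^2)" using rr_sq[OF assms] by simp
  finally have "(lip (kl x) (kl x) + 1) * (rr x)^2 = 0" by (simp add: distrib_right)
  then have "lip (kl x) (kl x) + 1 = 0" using r by simp
  then show ?thesis by simp
qed

lemma t0_kl: "x \<in> H2 \<Longrightarrow> t0 (kl x) > 0"
  using rr_pos by (simp add: kl_def)

lemma hdist_kl: assumes "p \<in> H2" "q \<in> H2"
  shows "hdist p q = arcosh (- lip (kl p) (kl q))"
proof -
  have "sqrt ((1 - (norm p)\<^sup>2) * (1 - (norm q)\<^sup>2)) = rr p * rr q"
    by (simp only: real_sqrt_mult cmod_power2 rr_def diff_diff_eq)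
  moreover have "- lip (kl p) (kl q) = (1 - inner p q) / (rr p * rr q)"
    by (simp add: lip_kl assms minus_divide_left)
  ultimately show ?thesis by (simp add: hdist_def)
qed

lemma lip_kl_nrm: assumes "x \<in> H2" shows "lip (kl x) (nrm u c) = (inner u x - c) / rr x"
  using rr_pos[OF assms] by (simp add: lip_def kl_def nrm_def inner_complex_def field_simps)

lemma klein_H2: assumes "t0 V > 0" "lip V V < 0" shows "klein V \<in> H2"
proof -
  have "(t1 V)^2 + (t2 V)^2 < (t0 V)^2" using assms(2) by (simp add: lip_def power2_eq_square)
  then have "(t1 V / t0 V)^2 + (t2 V / t0 V)^2 < 1" using assms(1)
    by (simp add: power_divide add_divide_distrib[symmetric])
  then show ?thesis by (simp add: H2_iff klein_def)
qed

lemma kl_klein: assumes "t0 V > 0" "lip V V < 0"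
  shows "kl (klein V) = vsc (1 / sqrt (- lip V V)) V"
proof -
  have rr: "rr (klein V) = sqrt (- lip V V) / t0 V"
  proof -
    have "1 - (Re (klein V))^2 - (Im (klein V))^2 = (- lip V V) / (t0 V)^2"
      using assms(1) by (simp add: klein_def lip_def field_simps power2_eq_square)
    then have "rr (klein V) = sqrt ((- lip V V) / (t0 V)^2)" by (simp only: rr_def)
    also have "\<dots> = sqrt (- lip V V) / sqrt ((t0 V)^2)" by (rule real_sqrt_divide)
    also have "\<dots> = sqrt (- lip V V) / t0 V" using assms(1) by simp
    finally show ?thesis .
  qed
  have s: "sqrt (- lip V V) > 0" using assms by simp
  show ?thesis using assms(1) s unfolding kl_def rr vsc_def
    by (cases V) (simp add: klein_def field_simps)
qed


lemma klein_ineq: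
  fixes a b c d :: real
  assumes "a^2 + b^2 < 1" "c^2 + d^2 < 1"
  shows "(1 - a*c - b*d)^2 \<ge> (1 - a^2 - b^2) * (1 - c^2 - d^2)" "1 - a*c - b*d > 0"
proof -
  have e: "(1 - a*c - b*d)^2 - (1 - a^2 - b^2) * (1 - c^2 - d^2) = (a-c)^2 + (b-d)^2 - (a*d - b*c)^2"
    by (simp add: power2_eq_square algebra_simps)
  have "((a-c)^2 + (b-d)^2) * (c^2 + d^2) - (a*d - b*c)^2 = ((a-c)*c + (b-d)*d)^2"
    by (simp add: power2_eq_square algebra_simps)
  then have l: "(a*d - b*c)^2 \<le> ((a-c)^2 + (b-d)^2) * (c^2 + d^2)"
    by (metis diff_ge_0_iff_ge zero_le_power2)
  have "0 \<le> ((a-c)^2 + (b-d)^2) * (1 - c^2 - d^2)"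
    using assms(2) by (intro mult_nonneg_nonneg) auto
  then show "(1 - a*c - b*d)^2 \<ge> (1 - a^2 - b^2) * (1 - c^2 - d^2)"
    using e l by (simp add: algebra_simps)
  have "(a-c)^2 + (b-d)^2 = a^2+b^2+c^2+d^2 - 2*(a*c+b*d)"
    by (simp add: power2_eq_square algebra_simps)
  moreover have "0 \<le> (a-c)^2 + (b-d)^2" by simp
  ultimately have "a*c + b*d \<le> (a^2+b^2+c^2+d^2)/2" by simp
  then show "1 - a*c - b*d > 0" using assms by argo
qed

lemma lip_kl_ge1: assumes "p \<in> H2" "q \<in> H2" shows "- lip (kl p) (kl q) \<ge> 1"
proof -
  have a: "(Re p)^2 + (Im p)^2 < 1" "(Re q)^2 + (Im q)^2 < 1" using assms by (auto simp: H2_iff)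
  note k = klein_ineq[OF a]
  have "- lip (kl p) (kl q) = (1 - Re p * Re q - Im p * Im q) / (rr p * rr q)"
    by (simp add: lip_kl assms inner_complex_def minus_divide_left)
  moreover have "rr p * rr q = sqrt ((1 - (Re p)^2 - (Im p)^2) * (1 - (Re q)^2 - (Im q)^2))"
    by (simp add: rr_def real_sqrt_mult)
  moreover have "sqrt ((1 - (Re p)^2 - (Im p)^2) * (1 - (Re q)^2 - (Im q)^2)) \<le> 1 - Re p * Re q - Im p * Im q"
    using k by (intro real_le_lsqrt) auto
  moreover have "rr p * rr q > 0" using rr_pos assms by simp
  ultimately show ?thesis by simp
qed

lemma hdist_nonneg: assumes "p \<in> H2" "q \<in> H2" shows "hdist p q \<ge> 0"
  using lip_kl_ge1[OF assms] by (simp add: hdist_kl assms)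

lemma gram_dist:
  assumes "lip P P = -1" "lip Q Q = -1" "lip P N = 0" "lip N N > 0"
  shows "(lip P Q)^2 \<ge> 1 + (lip Q N)^2 / lip N N"
proof -
  have g: "lip P P * (lip Q Q * lip N N - lip Q N * lip Q N) - lip P Q * (lip P Q * lip N N - lip Q N * lip P N)
   + lip P N * (lip P Q * lip Q N - lip Q Q * lip P N) = - ((det3 P Q N) ^ 2)" by (rule gram)
  have e: "lip N N + (lip Q N)^2 + (det3 P Q N)^2 = (lip P Q)^2 * lip N N"
    using g unfolding assms(1,2,3) by (simp add: power2_eq_square algebra_simps)
  have "(det3 P Q N)^2 \<ge> 0" by simp
  then have "lip N N + (lip Q N)^2 - (lip P Q)^2 * lip N N \<le> 0" using e by linarith
  then have "1 + (lip Q N)^2 / lip N N \<le> (lip P Q)^2"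
    using assms(4) by (simp add: field_simps)
  then show ?thesis by simp
qed

lemma hdist_ge:
  assumes "p \<in> H2" "q \<in> H2" "\<sigma> \<ge> 0" "(lip (kl p) (kl q))^2 \<ge> 1 + \<sigma>"
  shows "hdist p q \<ge> arcosh (sqrt (1 + \<sigma>))"
proof -
  have g: "- lip (kl p) (kl q) \<ge> 1" by (rule lip_kl_ge1[OF assms(1,2)])
  have "sqrt (1 + \<sigma>) \<le> sqrt ((lip (kl p) (kl q))^2)" using assms(4) by (rule real_sqrt_le_mono)
  also have "\<dots> = - lip (kl p) (kl q)" using g by simp
  finally have "sqrt (1 + \<sigma>) \<le> - lip (kl p) (kl q)" .
  moreover have "sqrt (1 + \<sigma>) \<ge> 1" using assms(3) by simp
  ultimately show ?thesis using g by (simp add: hdist_kl assms(1,2) not_less[symmetric])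
qed

lemma hdist_le:
  assumes "p \<in> H2" "q \<in> H2" "\<sigma> \<ge> 0" "(lip (kl p) (kl q))^2 \<le> 1 + \<sigma>"
  shows "hdist p q \<le> arcosh (sqrt (1 + \<sigma>))"
proof -
  have g: "- lip (kl p) (kl q) \<ge> 1" by (rule lip_kl_ge1[OF assms(1,2)])
  have "sqrt ((lip (kl p) (kl q))^2) \<le> sqrt (1 + \<sigma>)" using assms(4) by (rule real_sqrt_le_mono)
  moreover have "sqrt ((lip (kl p) (kl q))^2) = - lip (kl p) (kl q)" using g by simp
  ultimately have "- lip (kl p) (kl q) \<le> sqrt (1 + \<sigma>)" by simp
  moreover have "sqrt (1 + \<sigma>) \<ge> 1" using assms(3) by simp
  ultimately show ?thesis using g by (simp add: hdist_kl assms(1,2) not_less[symmetric])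
qed


section \<open>Lorentz algebra\<close>

lemma lip_sym: "lip X Y = lip Y X"
  by (simp add: lip_def algebra_simps)
lemma lip_vadd1[simp]: "lip (vadd X Y) Z = lip X Z + lip Y Z"
  by (simp add: lip_def vadd_def algebra_simps)
lemma lip_vadd2[simp]: "lip Z (vadd X Y) = lip Z X + lip Z Y"
  by (simp add: lip_def vadd_def algebra_simps)
lemma lip_vsc1[simp]: "lip (vsc r X) Z = r * lip X Z"
  by (simp add: lip_def vsc_def algebra_simps)
lemma lip_vsc2[simp]: "lip Z (vsc r X) = r * lip Z X"
  by (simp add: lip_def vsc_def algebra_simps)
lemma det3_vadd1[simp]: "det3 (vadd X Y) Z W = det3 X Z W + det3 Y Z W"
  by (simp add: det3_def vadd_def algebra_simps)
lemma det3_vadd2[simp]: "det3 Z (vadd X Y) W = det3 Z X W + det3 Z Y W"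
  by (simp add: det3_def vadd_def algebra_simps)
lemma det3_vadd3[simp]: "det3 Z W (vadd X Y) = det3 Z W X + det3 Z W Y"
  by (simp add: det3_def vadd_def algebra_simps)
lemma det3_vsc1[simp]: "det3 (vsc r X) Z W = r * det3 X Z W"
  by (simp add: det3_def vsc_def algebra_simps)
lemma det3_vsc2[simp]: "det3 Z (vsc r X) W = r * det3 Z X W"
  by (simp add: det3_def vsc_def algebra_simps)
lemma det3_vsc3[simp]: "det3 Z W (vsc r X) = r * det3 Z W X"
  by (simp add: det3_def vsc_def algebra_simps)
lemma det3_rep[simp]: "det3 X X Y = 0" "det3 X Y X = 0" "det3 Y X X = 0"
  by (simp_all add: det3_def algebra_simps)
lemma det3_swap12: "det3 Y X Z = - det3 X Y Z"
  by (simp add: det3_def algebra_simps)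
lemma det3_swap13: "det3 Z Y X = - det3 X Y Z"
  by (simp add: det3_def algebra_simps)
lemma det3_swap23: "det3 X Z Y = - det3 X Y Z"
  by (simp add: det3_def algebra_simps)
lemma det3_cyc: "det3 Y Z X = det3 X Y Z" "det3 Z X Y = det3 X Y Z"
  by (simp_all add: det3_def algebra_simps)
lemma cr_vadd1[simp]: "cr (vadd X Y) Z = vadd (cr X Z) (cr Y Z)"
  by (simp add: cr_def vadd_def algebra_simps)
lemma cr_vadd2[simp]: "cr Z (vadd X Y) = vadd (cr Z X) (cr Z Y)"
  by (simp add: cr_def vadd_def algebra_simps)
lemma cr_vsc1[simp]: "cr (vsc r X) Z = vsc r (cr X Z)"
  by (simp add: cr_def vsc_def algebra_simps)
lemma cr_vsc2[simp]: "cr Z (vsc r X) = vsc r (cr Z X)"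
  by (simp add: cr_def vsc_def algebra_simps)

lemma vec_eq0: assumes "vsc d E = V3 0 0 0" "d \<noteq> 0" shows "t0 E = 0" "t1 E = 0" "t2 E = 0"
  using assms by (auto simp: vsc_def)

lemma spacelike_perp: assumes "lip T T < 0" "lip T N = 0" shows "lip N N \<ge> 0"
proof -
  obtain t0' t1' t2' where T: "T = V3 t0' t1' t2'" by (cases T)
  obtain n0 n1 n2 where N: "N = V3 n0 n1 n2" by (cases N)
  have h1: "t1'^2 + t2'^2 < t0'^2" using assms(1) by (simp add: T lip_def power2_eq_square)
  have h2: "t0' * n0 = t1' * n1 + t2' * n2" using assms(2) by (simp add: T N lip_def)
  have cs: "(t1' * n1 + t2' * n2)^2 \<le> (t1'^2 + t2'^2) * (n1^2 + n2^2)"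
  proof -
    have "(t1'^2 + t2'^2) * (n1^2 + n2^2) - (t1' * n1 + t2' * n2)^2 = (t1' * n2 - t2' * n1)^2"
      by (simp add: power2_eq_square algebra_simps)
    then show ?thesis by (metis diff_ge_0_iff_ge zero_le_power2)
  qed
  have "t0'^2 * n0^2 \<le> t0'^2 * (n1^2 + n2^2)"
  proof -
    have "t0'^2 * n0^2 = (t1' * n1 + t2' * n2)^2" using h2 by (metis power_mult_distrib)
    also have "\<dots> \<le> (t1'^2 + t2'^2) * (n1^2 + n2^2)" by (rule cs)
    also have "\<dots> \<le> t0'^2 * (n1^2 + n2^2)" using h1 by (intro mult_right_mono) auto
    finally show ?thesis .
  qed
  moreover have "t0'^2 > 0" using h1 by (smt (verit) zero_le_power2)
  ultimately have "n0^2 \<le> n1^2 + n2^2" by simp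
  then show ?thesis by (simp add: N lip_def power2_eq_square)
qed

lemma cs_perp: assumes "lip T T < 0" "lip T N1 = 0" "lip T N2 = 0"
  shows "(lip N1 N2)^2 \<le> lip N1 N1 * lip N2 N2"
proof -
  have g: "lip T T * (lip N1 N1 * lip N2 N2 - lip N1 N2 * lip N1 N2) - lip T N1 * (lip T N1 * lip N2 N2 - lip N1 N2 * lip T N2)
   + lip T N2 * (lip T N1 * lip N1 N2 - lip N1 N1 * lip T N2) = - ((det3 T N1 N2) ^ 2)" by (rule gram)
  then have "lip T T * (lip N1 N1 * lip N2 N2 - lip N1 N2 * lip N1 N2) \<le> 0" using assms by simp
  then have "lip N1 N1 * lip N2 N2 - lip N1 N2 * lip N1 N2 \<ge> 0" using assms(1)
    by (simp add: mult_le_0_iff)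
  then show ?thesis by (simp add: power2_eq_square)
qed

lemma cone_real:
  fixes a1 a2 n11 n12 n22 \<alpha> \<beta> \<sigma> :: real
  assumes "a1 \<ge> 0" "a2 \<ge> 0" "a1^2 \<ge> \<sigma> * n11" "a2^2 \<ge> \<sigma> * n22" "\<sigma> \<ge> 0"
    "n12^2 \<le> n11 * n22" "n11 \<ge> 0" "n22 \<ge> 0" "\<alpha> \<ge> 0" "\<beta> \<ge> 0"
  shows "(\<alpha> * a1 + \<beta> * a2)^2 \<ge> \<sigma> * (\<alpha>^2 * n11 + 2 * \<alpha> * \<beta> * n12 + \<beta>^2 * n22)"
proof -
  have key: "a1 * a2 \<ge> \<sigma> * n12"
  proof (cases "n12 \<le> 0")
    case True
    then have "\<sigma> * n12 \<le> 0" using assms(5) by (simp add: mult_nonneg_nonpos)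
    moreover have "a1 * a2 \<ge> 0" using assms(1,2) by simp
    ultimately show ?thesis by linarith
  next
    case False
    have "(\<sigma> * n12)^2 = \<sigma>^2 * n12^2" by (simp add: power_mult_distrib)
    also have "\<dots> \<le> \<sigma>^2 * (n11 * n22)" using assms(6) by (simp add: mult_left_mono)
    also have "\<dots> = (\<sigma> * n11) * (\<sigma> * n22)" by (simp add: power2_eq_square)
    also have "\<dots> \<le> a1^2 * a2^2"
      using assms(3,4,5,7,8) by (intro mult_mono) auto
    also have "\<dots> = (a1 * a2)^2" by (simp add: power_mult_distrib)
    finally have "(\<sigma> * n12)^2 \<le> (a1 * a2)^2" .
    then show ?thesis using assms(1,2) by (simp add: abs_le_square_iff[symmetric])
  qed
  have "(\<alpha> * a1 + \<beta> * a2)^2 = \<alpha>^2 * a1^2 + 2 * \<alpha> * \<beta> * (a1 * a2) + \<beta>^2 * a2^2"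
    by (simp add: power2_eq_square algebra_simps)
  moreover have "\<alpha>^2 * a1^2 \<ge> \<alpha>^2 * (\<sigma> * n11)" using assms(3) by (simp add: mult_left_mono)
  moreover have "\<beta>^2 * a2^2 \<ge> \<beta>^2 * (\<sigma> * n22)" using assms(4) by (simp add: mult_left_mono)
  moreover have "2 * \<alpha> * \<beta> * (a1 * a2) \<ge> 2 * \<alpha> * \<beta> * (\<sigma> * n12)"
    using key assms(9,10) by (simp add: mult_left_mono)
  ultimately show ?thesis by (simp add: algebra_simps)
qed


lemma cone:
  assumes T: "lip T T < 0" "lip T N1 = 0" "lip T N2 = 0" "lip T N = 0"
   and PQ: "lip P N1 = 0" "lip P N2 < 0" "lip Q N2 = 0" "lip Q N1 < 0" "lip P N \<le> 0" "lip Q N \<le> 0"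
   and d: "det3 T P Q \<noteq> 0"
   and V: "lip V N1 \<le> 0" "lip V N2 \<le> 0" "(lip V N1)^2 \<ge> \<sigma> * lip N1 N1"
          "(lip V N2)^2 \<ge> \<sigma> * lip N2 N2" "\<sigma> \<ge> 0"
  shows "lip V N \<le> 0 \<and> (lip V N)^2 \<ge> \<sigma> * lip N N"
proof -
  define \<alpha> where "\<alpha> = lip Q N / lip Q N1"
  define \<beta> where "\<beta> = lip P N / lip P N2"
  have a0: "\<alpha> \<ge> 0" unfolding \<alpha>_def using PQ by (simp add: divide_nonpos_neg)
  have b0: "\<beta> \<ge> 0" unfolding \<beta>_def using PQ by (simp add: divide_nonpos_neg)
  define E where "E = vadd N (vadd (vsc (-\<alpha>) N1) (vsc (-\<beta>) N2))"
  have "lip T E = 0" using T by (simp add: E_def)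
  then have eT: "lip E T = 0" by (simp add: lip_sym)
  have "lip P E = 0" using PQ by (simp add: E_def \<beta>_def)
  then have eP: "lip E P = 0" by (simp add: lip_sym)
  have "lip Q E = 0" using PQ by (simp add: E_def \<alpha>_def)
  then have eQ: "lip E Q = 0" by (simp add: lip_sym)
  have "vadd (vadd (vsc (lip E T) (cr P Q)) (vsc (lip E P) (cr Q T))) (vsc (lip E Q) (cr T P)) = vsc (det3 T P Q) E"
    by (rule cramer)
  then have "vsc (det3 T P Q) E = V3 0 0 0" by (simp add: eT eP eQ vsc_def vadd_def)
  note z = vec_eq0[OF this d]
  have c0: "t0 N = \<alpha> * t0 N1 + \<beta> * t0 N2" "t1 N = \<alpha> * t1 N1 + \<beta> * t1 N2" "t2 N = \<alpha> * t2 N1 + \<beta> * t2 N2"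
    using z by (simp_all add: E_def vadd_def vsc_def)
  have lv: "lip V N = \<alpha> * lip V N1 + \<beta> * lip V N2"
    by (simp add: lip_def c0 algebra_simps)
  have ln: "lip N N = \<alpha>^2 * lip N1 N1 + 2 * \<alpha> * \<beta> * lip N1 N2 + \<beta>^2 * lip N2 N2"
    by (simp add: lip_def c0 power2_eq_square algebra_simps)
  have n11: "lip N1 N1 \<ge> 0" by (rule spacelike_perp[OF T(1,2)])
  have n22: "lip N2 N2 \<ge> 0" by (rule spacelike_perp[OF T(1,3)])
  have cs: "(lip N1 N2)^2 \<le> lip N1 N1 * lip N2 N2" by (rule cs_perp[OF T(1,2,3)])
  have "(\<alpha> * (- lip V N1) + \<beta> * (- lip V N2))^2 \<ge> \<sigma> * (\<alpha>^2 * lip N1 N1 + 2 * \<alpha> * \<beta> * lip N1 N2 + \<beta>^2 * lip N2 N2)"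
    by (rule cone_real) (use V n11 n22 cs a0 b0 in auto)
  moreover have "(\<alpha> * (- lip V N1) + \<beta> * (- lip V N2))^2 = (lip V N)^2"
    by (simp add: lv power2_eq_square algebra_simps)
  moreover have "lip V N \<le> 0" using lv V a0 b0 by (simp add: add_nonpos_nonpos mult_nonneg_nonpos)
  ultimately show ?thesis using ln by simp
qed


definition nA :: "v3 \<Rightarrow> v3 \<Rightarrow> v3 \<Rightarrow> real \<Rightarrow> v3" where
  "nA A B C \<epsilon> = vsc (det3 A B C) (vadd (vadd (cr A C) (cr B A)) (vsc \<epsilon> (cr B C)))"

lemma dperm: "det3 B A C = - det3 A B C" "det3 C A B = det3 A B C" "det3 A C B = - det3 A B C"
   "det3 B C A = det3 A B C" "det3 C B A = - det3 A B C"
  by (simp_all add: det3_def algebra_simps)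

lemma VA:
  assumes u: "lip A A = -1" "lip B B = -1" "lip C C = -1" "lip A B < 0"
    and D: "det3 A B C \<noteq> 0" and e: "\<epsilon> > 0" and s: "\<sigma> \<ge> 0"
    and h: "(det3 A B C)^2 \<ge> \<sigma> * ((lip A B)^2 - 1)"
    and hn: "(det3 A B C)^4 \<ge> \<sigma> * lip (nA A B C \<epsilon>) (nA A B C \<epsilon>)"
    and N: "lip (vadd A (vsc \<epsilon> B)) N = 0" "lip B N \<le> 0" "lip (vadd A (vsc \<epsilon> C)) N \<le> 0"
  shows "lip C N \<le> 0 \<and> (lip C N)^2 \<ge> \<sigma> * lip N N"
proof -
  define d where "d = det3 A B C"
  define T where "T = vadd A (vsc \<epsilon> B)"
  define Q where "Q = vadd A (vsc \<epsilon> C)"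
  define N1 where "N1 = vsc (- d) (cr A B)"
  define N2 where "N2 = nA A B C \<epsilon>"
  have dp: "det3 B A C = - d" "det3 C A B = d" "det3 A C B = - d" "det3 B C A = d" "det3 C B A = - d"
    unfolding d_def by (simp_all add: det3_def algebra_simps)
  have dd: "d \<noteq> 0" using D d_def by simp
  have n2: "N2 = vsc d (vadd (vadd (cr A C) (cr B A)) (vsc \<epsilon> (cr B C)))" by (simp add: N2_def nA_def d_def)
  have "lip T T = -1 + 2 * \<epsilon> * lip A B - \<epsilon>^2"
    using u by (simp add: T_def lip_sym[of B A] power2_eq_square algebra_simps)
  also have "\<dots> < 0" using u(4) e by (smt (verit) mult_pos_neg zero_le_power2)
  finally have tt: "lip T T < 0" .
  have tn1: "lip T N1 = 0" by (simp add: T_def N1_def lip_cr)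
  have tn2: "lip T N2 = 0" by (simp add: T_def n2 lip_cr dp d_def algebra_simps)
  have tn: "lip T N = 0" using N(1) by (simp add: T_def)
  have pn1: "lip B N1 = 0" by (simp add: N1_def lip_cr)
  have pn2: "lip B N2 < 0" using dd by (simp add: n2 lip_cr dp) (metis not_real_square_gt_zero)
  have qn2: "lip Q N2 = 0" by (simp add: Q_def n2 lip_cr dp d_def algebra_simps)
  have qn1: "lip Q N1 < 0" using dd e by (simp add: Q_def N1_def lip_cr dp) (metis mult.left_commute mult_pos_pos not_real_square_gt_zero)
  have dt: "det3 T B Q \<noteq> 0" using dd e by (simp add: T_def Q_def d_def)
  have vn1: "lip C N1 = - (d^2)" by (simp add: N1_def lip_cr dp power2_eq_square)
  have vn2: "lip C N2 = - (d^2)" by (simp add: n2 lip_cr dp power2_eq_square)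
  have n11: "lip N1 N1 = d^2 * ((lip A B)^2 - 1)"
  proof -
    have "lip N1 N1 = d^2 * lip (cr A B) (cr A B)" by (simp add: N1_def power2_eq_square)
    also have "\<dots> = d^2 * ((lip A B)^2 - 1)" using u by (simp add: lip_cr_cr)
    finally show ?thesis .
  qed
  have c1: "(lip C N1)^2 \<ge> \<sigma> * lip N1 N1"
  proof -
    have "\<sigma> * lip N1 N1 = d^2 * (\<sigma> * ((lip A B)^2 - 1))" by (simp add: n11 algebra_simps)
    also have "\<dots> \<le> d^2 * d^2" using h d_def by (intro mult_left_mono) auto
    also have "\<dots> = (lip C N1)^2" by (simp add: vn1 power2_eq_square)
    finally show ?thesis .
  qed
  have c2: "(lip C N2)^2 \<ge> \<sigma> * lip N2 N2"
  proof -
    have "(lip C N2)^2 = d^4" using vn2 by (simp add: power2_eq_square power4_eq_xxxx)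
    then show ?thesis using hn by (simp add: N2_def d_def)
  qed
  show ?thesis
    by (rule cone[OF tt tn1 tn2 tn pn1 pn2 qn2 qn1 N(2) _ dt _ _ c1 c2 s])
       (use N(3) vn1 vn2 in \<open>simp_all add: Q_def\<close>)
qed



definition nB :: "v3 \<Rightarrow> v3 \<Rightarrow> v3 \<Rightarrow> v3" where
  "nB A B C = vsc (det3 A B C) (cr B (vadd A (vsc (-1) C)))"
definition nBC :: "v3 \<Rightarrow> v3 \<Rightarrow> v3 \<Rightarrow> v3" where
  "nBC A B C = vsc (- det3 A B C) (cr B C)"

lemma sqpos: "d \<noteq> 0 \<Longrightarrow> (0::real) < d * d"
  by (metis not_real_square_gt_zero)

lemma VB:
  assumes u: "lip A A = -1" "lip B B = -1" "lip C C = -1" "lip A C < 0"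
    and D: "det3 A B C \<noteq> 0" and e: "\<epsilon> > 0" and s: "\<sigma> \<ge> 0"
    and h: "(det3 A B C)^2 \<ge> \<sigma> * ((lip A B)^2 - 1)"
    and hs: "(det3 A B C)^4 \<ge> \<sigma> * lip (nB A B C) (nB A B C)"
    and ha1: "(lip (vadd A (vsc \<epsilon> C)) (nB A B C))^2 \<ge> \<sigma> * lip (nB A B C) (nB A B C) * (- lip (vadd A (vsc \<epsilon> C)) (vadd A (vsc \<epsilon> C)))"
    and ha2: "(lip (vadd A (vsc \<epsilon> C)) (nBC A B C))^2 \<ge> \<sigma> * lip (nBC A B C) (nBC A B C) * (- lip (vadd A (vsc \<epsilon> C)) (vadd A (vsc \<epsilon> C)))"
    and N: "lip B N = 0" "lip (vadd A (vsc \<epsilon> B)) N \<le> 0" "lip C N \<le> 0"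
  shows "(lip C N \<le> 0 \<and> (lip C N)^2 \<ge> \<sigma> * lip N N) \<or>
     (lip (vadd A (vsc \<epsilon> C)) N \<le> 0 \<and> (lip (vadd A (vsc \<epsilon> C)) N)^2 \<ge> (\<sigma> * (- lip (vadd A (vsc \<epsilon> C)) (vadd A (vsc \<epsilon> C)))) * lip N N)"
proof -
  define d where "d = det3 A B C"
  define A2 where "A2 = vadd A (vsc \<epsilon> C)"
  define N1 where "N1 = vsc (- d) (cr A B)"
  define Ns where "Ns = nB A B C"
  define Nc where "Nc = nBC A B C"
  have dp: "det3 B A C = - d" "det3 C A B = d" "det3 A C B = - d" "det3 B C A = d" "det3 C B A = - d"
    unfolding d_def by (simp_all add: det3_def algebra_simps)
  have dd: "d \<noteq> 0" using D d_def by simp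
  have ns: "Ns = vsc d (cr B (vadd A (vsc (-1) C)))" by (simp add: Ns_def nB_def d_def)
  have nc: "Nc = vsc (- d) (cr B C)" by (simp add: Nc_def nBC_def d_def)
  have bb: "lip B B < 0" using u by simp
  have bn1: "lip B N1 = 0" by (simp add: N1_def lip_cr)
  have bns: "lip B Ns = 0" by (simp add: ns lip_cr)
  have bnc: "lip B Nc = 0" by (simp add: nc lip_cr)
  have an1: "lip A N1 = 0" by (simp add: N1_def lip_cr)
  have ans: "lip A Ns = - (d^2)" by (simp add: ns lip_cr dp d_def[symmetric] power2_eq_square)
  have anc: "lip A Nc = - (d^2)" unfolding nc by (simp add: lip_cr d_def power2_eq_square)
  have cn1: "lip C N1 = - (d^2)" by (simp add: N1_def lip_cr dp power2_eq_square)
  have cns: "lip C Ns = - (d^2)" by (simp add: ns lip_cr dp power2_eq_square)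
  have cnc: "lip C Nc = 0" by (simp add: nc lip_cr)
  have d2: "d^2 > 0" using dd by simp
  have aN: "lip A N \<le> 0" using N by simp
  have n11: "lip N1 N1 = d^2 * ((lip A B)^2 - 1)"
  proof -
    have "lip N1 N1 = d^2 * lip (cr A B) (cr A B)" by (simp add: N1_def power2_eq_square)
    also have "\<dots> = d^2 * ((lip A B)^2 - 1)" using u by (simp add: lip_cr_cr)
    finally show ?thesis .
  qed
  have c1: "(lip C N1)^2 \<ge> \<sigma> * lip N1 N1"
  proof -
    have "\<sigma> * lip N1 N1 = d^2 * (\<sigma> * ((lip A B)^2 - 1))" by (simp add: n11 algebra_simps)
    also have "\<dots> \<le> d^2 * d^2" using h d_def by (intro mult_left_mono) auto
    also have "\<dots> = (lip C N1)^2" by (simp add: cn1 power2_eq_square)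
    finally show ?thesis .
  qed
  have c2: "(lip C Ns)^2 \<ge> \<sigma> * lip Ns Ns"
  proof -
    have "(lip C Ns)^2 = d^4" using cns by (simp add: power2_eq_square power4_eq_xxxx)
    then show ?thesis using hs by (simp add: Ns_def d_def)
  qed
  show ?thesis
  proof (cases "lip C N \<le> lip A N")
    case True
    define Q where "Q = vadd C (vsc (-1) A)"
    have qns: "lip Q Ns = 0" by (simp add: Q_def ans cns)
    have qn1: "lip Q N1 < 0" using d2 by (simp add: Q_def an1 cn1)
    have qN: "lip Q N \<le> 0" using True by (simp add: Q_def)
    have dt: "det3 B A Q \<noteq> 0" using dd by (simp add: Q_def dp)
    have "lip C N \<le> 0 \<and> (lip C N)^2 \<ge> \<sigma> * lip N N"
      by (rule cone[OF bb bn1 bns N(1) an1 _ qns qn1 aN qN dt _ _ c1 c2 s])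
         (use ans cn1 cns d2 in auto)
    then show ?thesis by blast
  next
    case False
    define P where "P = vadd A (vsc (-1) C)"
    have pns: "lip P Ns = 0" by (simp add: P_def ans cns)
    have pnc: "lip P Nc < 0" using d2 by (simp add: P_def anc cnc)
    have pN: "lip P N \<le> 0" using False by (simp add: P_def)
    have dt: "det3 B P C \<noteq> 0" using dd by (simp add: P_def dp)
    have aa: "lip A2 A2 < 0"
    proof -
      have "lip A2 A2 = -1 + 2 * \<epsilon> * lip A C - \<epsilon>^2"
        using u by (simp add: A2_def lip_sym[of C A] power2_eq_square algebra_simps)
      also have "\<dots> < 0" using u(4) e by (smt (verit) mult_pos_neg zero_le_power2)
      finally show ?thesis .
    qed
    have s': "\<sigma> * (- lip A2 A2) \<ge> 0" using s aa by (simp add: mult_nonneg_nonpos)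
    have v1: "lip A2 Ns \<le> 0"
    proof -
      have "lip A2 Ns = - (d^2) - \<epsilon> * d^2" by (simp add: A2_def ans cns)
      moreover have "\<epsilon> * d^2 \<ge> 0" using e by simp
      ultimately show ?thesis using d2 by linarith
    qed
    have v2: "lip A2 Nc \<le> 0" using d2 by (simp add: A2_def anc cnc)
    have w1: "(lip A2 Ns)^2 \<ge> (\<sigma> * (- lip A2 A2)) * lip Ns Ns"
      using ha1 by (simp add: A2_def Ns_def algebra_simps)
    have w2: "(lip A2 Nc)^2 \<ge> (\<sigma> * (- lip A2 A2)) * lip Nc Nc"
      using ha2 by (simp add: A2_def Nc_def algebra_simps)
    have "lip A2 N \<le> 0 \<and> (lip A2 N)^2 \<ge> (\<sigma> * (- lip A2 A2)) * lip N N"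
      by (rule cone[OF bb bns bnc N(1) pns pnc cnc _ pN N(3) dt v1 v2 w1 w2 s'])
         (use cns d2 in auto)
    then show ?thesis by (simp add: A2_def)
  qed
qed




definition hl :: "complex \<Rightarrow> real \<Rightarrow> complex set" where "hl u c = {x \<in> H2. inner u x = c}"
definition cross2 :: "complex \<Rightarrow> complex \<Rightarrow> real" where "cross2 w z = Re w * Im z - Im w * Re z"

lemma collinear_cross: "collinear {p, q, r} \<longleftrightarrow> cross2 (q - p) (r - p) = 0"
proof -
  have "collinear {p, q, r} = collinear {q, p, r}" by (simp add: insert_commute)
  also have "\<dots> = collinear {0, q - p, r - p}" by (rule collinear_3) simp
  also have "\<dots> \<longleftrightarrow> (r - p) / (q - p) \<in> \<real>" by (rule collinear_iff_Reals)
  also have "\<dots> \<longleftrightarrow> cross2 (q - p) (r - p) = 0"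
  proof (cases "q - p = 0")
    case True
    then show ?thesis by (simp add: cross2_def)
  next
    case False
    then have nz: "(Re (q - p))^2 + (Im (q - p))^2 \<noteq> 0"
      by (metis complex_eq_0 )
    have "(r - p) / (q - p) \<in> \<real> \<longleftrightarrow> Im ((r - p) / (q - p)) = 0" by (simp add: complex_is_Real_iff)
    also have "\<dots> \<longleftrightarrow> Im (r - p) * Re (q - p) - Re (r - p) * Im (q - p) = 0"
      using False by (auto simp: Im_divide complex_eq_iff)
    also have "\<dots> \<longleftrightarrow> cross2 (q - p) (r - p) = 0" by (auto simp: cross2_def algebra_simps)
    finally show ?thesis .
  qed
  finally show ?thesis .
qed

lemma inner_iu: "inner u (\<i> * u) = 0"
  by (simp add: inner_complex_def algebra_simps)

lemma hline_hl: assumes u: "u \<noteq> 0" and a: "a \<in> H2" "inner u a = c" shows "hline (hl u c)"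
proof -
  obtain e where e: "e > 0" "ball a e \<subseteq> H2" using a(1) unfolding H2_def
    by (meson Elementary_Metric_Spaces.open_ball openE)
  define \<delta> where "\<delta> = e / (2 * cmod u)"
  have cu: "cmod u > 0" using u by simp
  have dpos: "\<delta> > 0" using e cu by (simp add: \<delta>_def)
  define b where "b = a + of_real \<delta> * (\<i> * u)"
  have "dist a b = \<delta> * cmod u" using dpos by (simp add: b_def dist_norm norm_mult)
  also have "\<dots> = e / 2" using cu by (simp add: \<delta>_def)
  finally have "b \<in> ball a e" using e by simp
  then have bH: "b \<in> H2" using e by auto
  have ab: "a \<noteq> b" using dpos u by (simp add: b_def)
  have cr: "cross2 (b - a) (x - a) = - \<delta> * (inner u x - c)" for x
    unfolding a(2)[symmetric] by (simp add: b_def cross2_def inner_complex_def algebra_simps)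
  have "affine hull {a, b} = {x. inner u x = c}"
  proof -
    have "x \<in> affine hull {a, b} \<longleftrightarrow> inner u x = c" for x
    proof -
      have "x \<in> affine hull {a, b} \<longleftrightarrow> collinear {a, b, x}" using collinear_3_affine_hull[OF ab] by simp
      also have "\<dots> \<longleftrightarrow> cross2 (b - a) (x - a) = 0" by (rule collinear_cross)
      also have "\<dots> \<longleftrightarrow> inner u x = c" using cr dpos by simp
      finally show ?thesis .
    qed
    then show ?thesis by auto
  qed
  then have "hl u c = affine hull {a, b} \<inter> H2" by (auto simp: hl_def)
  then show ?thesis unfolding hline_def using a(1) bH ab by blast
qed

lemma closure_hl: "closure (hl u c) \<subseteq> {x. inner u x = c} \<inter> cball 0 1"
proof (rule closure_minimal)
  show "hl u c \<subseteq> {x. inner u x = c} \<inter> cball 0 1" by (auto simp: hl_def H2_def)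
  show "closed ({x. inner u x = c} \<inter> cball 0 1)" by (intro closed_Int closed_hyperplane closed_cball)
qed

lemma supporting_hl: assumes "supporting H K"
  obtains u c where "u \<noteq> 0" "H = hl u c" "\<forall>x\<in>K. inner u x \<le> c" "hl u c \<inter> K \<noteq> {}"
  using assms unfolding supporting_def hl_def by blast

lemma touch: assumes "\<forall>x\<in>convex hull S. inner u x \<le> c" "hl u c \<inter> convex hull S \<noteq> {}"
  shows "\<exists>v\<in>S. inner u v = c"
proof (rule ccontr)
  assume "\<not> ?thesis"
  then have "\<forall>v\<in>S. inner u v < c" using assms(1) hull_inc[of _ S] by (metis order_le_less)
  then have "convex hull S \<subseteq> {x. inner u x < c}"
    by (intro hull_minimal) (auto intro: convex_halfspace_lt)
  then show False using assms(2) by (auto simp: hl_def)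
qed

lemma hline_sub: "hline H \<Longrightarrow> H \<subseteq> H2"
  by (auto simp: hline_def)




definition phi :: "complex \<Rightarrow> real \<Rightarrow> complex \<Rightarrow> real" where
  "phi u c x = (inner u x - c)^2 / (1 - (Re x)^2 - (Im x)^2)"

lemma phi_lip: "x \<in> H2 \<Longrightarrow> (lip (kl x) (nrm u c))^2 = phi u c x"
  by (simp add: lip_kl_nrm phi_def power_divide rr_sq)

lemma lip_nrm: "lip (nrm u c) (nrm u c) = (Re u)^2 + (Im u)^2 - c^2"
  by (simp add: lip_def nrm_def power2_eq_square)

lemma nu_pos: assumes "u \<noteq> 0" "p \<in> H2" "inner u p = c" shows "lip (nrm u c) (nrm u c) > 0"
proof -
  have p: "(Re p)^2 + (Im p)^2 < 1" using assms(2) by (simp add: H2_iff)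
  have u: "(Re u)^2 + (Im u)^2 > 0" using assms(1) by (simp add: complex_eq_iff sum_power2_gt_zero_iff)
  have "c^2 = (Re u * Re p + Im u * Im p)^2" using assms(3) by (simp add: inner_complex_def)
  also have "\<dots> \<le> ((Re u)^2 + (Im u)^2) * ((Re p)^2 + (Im p)^2)"
  proof -
    have "((Re u)^2 + (Im u)^2) * ((Re p)^2 + (Im p)^2) - (Re u * Re p + Im u * Im p)^2 = (Re u * Im p - Im u * Re p)^2"
      by (simp add: power2_eq_square algebra_simps)
    then show ?thesis by (metis diff_ge_0_iff_ge zero_le_power2)
  qed
  also have "\<dots> < ((Re u)^2 + (Im u)^2) * 1" using p u by (intro mult_strict_left_mono) auto
  finally show ?thesis by (simp add: lip_nrm)
qed

lemma hsetdist_ge: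
  assumes "H \<noteq> {}" "H' \<noteq> {}" "\<And>p q. p \<in> H \<Longrightarrow> q \<in> H' \<Longrightarrow> hdist p q \<ge> s"
  shows "hsetdist H H' \<ge> s"
  unfolding hsetdist_def
  by (rule cINF_greatest[OF assms(1)], rule cINF_greatest[OF assms(2)]) (rule assms(3))

lemma tangent:
  assumes K: "compact K" "K \<subseteq> H2" and u: "u \<noteq> 0" and half: "\<forall>x\<in>K. inner u x \<le> c"
    and p: "p \<in> H2" "inner u p = c"
    and z0: "z0 \<in> K" and sig: "\<sigma> > 0" and big: "phi u c z0 \<ge> \<sigma> * lip (nrm u c) (nrm u c)"
  shows "\<exists>H'. supporting H' K \<and> ultraparallel (hl u c) H' \<and> hsetdist (hl u c) H' \<ge> arcosh (sqrt (1+\<sigma>))"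
proof -
  define \<nu> where "\<nu> = lip (nrm u c) (nrm u c)"
  have nu: "\<nu> > 0" unfolding \<nu>_def by (rule nu_pos[OF u p])
  have den: "1 - (Re x)^2 - (Im x)^2 > 0" if "x \<in> K" for x
    using that K(2) by (auto simp: H2_iff)
  have cont: "continuous_on K (phi u c)"
    unfolding phi_def using den by (intro continuous_intros) (auto simp: inner_complex_def, fastforce)
  obtain z where z: "z \<in> K" "\<forall>x\<in>K. phi u c x \<le> phi u c z"
    using continuous_attains_sup[OF K(1) _ cont] z0 by blast
  define k2 where "k2 = phi u c z"
  have k2: "k2 > 0"
  proof -
    have "\<sigma> * \<nu> > 0" using sig nu by simp
    then show ?thesis using z(2) z0 big unfolding k2_def \<nu>_def by force
  qed
  have zH: "z \<in> H2" using z K by auto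
  define g where "g x = (c - inner u x)^2 + k2 * ((Re x)^2 + (Im x)^2)" for x
  have gle: "g x \<le> k2" if "x \<in> K" for x
  proof -
    have "phi u c x \<le> k2" using z(2) that k2_def by simp
    then have "(inner u x - c)^2 \<le> k2 * (1 - (Re x)^2 - (Im x)^2)"
      using den[OF that] by (simp add: phi_def divide_le_eq)
    then show ?thesis by (simp add: g_def power2_commute algebra_simps)
  qed
  have gz: "g z = k2"
  proof -
    have "(inner u z - c)^2 = k2 * (1 - (Re z)^2 - (Im z)^2)"
      using den[OF z(1)] by (simp add: k2_def phi_def)
    then show ?thesis by (simp add: g_def power2_commute algebra_simps)
  qed
  define w where "w = k2 *\<^sub>R z - (c - inner u z) *\<^sub>R u"
  have ident: "g x = g z + 2 * inner w (x - z) + (inner u (x - z))^2 + k2 * ((Re (x - z))^2 + (Im (x - z))^2)" for x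
    by (simp add: g_def w_def inner_complex_def power2_eq_square algebra_simps)
  have pH: "p \<in> hl u c" using p by (simp add: hl_def)
  have wnz: "w \<noteq> 0"
  proof
    assume w0: "w = 0"
    have "g p \<ge> k2" using ident[of p] gz k2 by (simp add: w0)
    moreover have "g p < k2"
    proof -
      have "(Re p)^2 + (Im p)^2 < 1" using p(1) by (simp add: H2_iff)
      then have "k2 * ((Re p)^2 + (Im p)^2) < k2 * 1" using k2 by (intro mult_strict_left_mono)
      then show ?thesis using p(2) by (simp add: g_def)
    qed
    ultimately show False by simp
  qed
  define H' where "H' = hl w (inner w z)"
  have zH': "z \<in> H'" using zH by (simp add: H'_def hl_def)
  have hl': "hline H'" unfolding H'_def by (rule hline_hl[OF wnz zH]) simp
  have sup: "supporting H' K"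
    unfolding supporting_def
  proof (intro conjI exI)
    show "hline H'" by (rule hl')
    show "H' \<inter> K \<noteq> {}" using zH' z(1) by blast
    show "w \<noteq> 0" by (rule wnz)
    show "H' = {x \<in> H2. inner w x = inner w z}" by (simp add: H'_def hl_def)
    show "\<forall>x\<in>K. inner w x \<le> inner w z"
    proof
      fix x assume x: "x \<in> K"
      have "2 * inner w (x - z) = g x - g z - (inner u (x - z))^2 - k2 * ((Re (x - z))^2 + (Im (x - z))^2)"
        using ident[of x] by simp
      moreover have "k2 * ((Re (x - z))^2 + (Im (x - z))^2) \<ge> 0" using k2 by simp
      moreover have "(inner u (x - z))^2 \<ge> 0" by simp
      ultimately have "inner w (x - z) \<le> 0" using gle[OF x] gz by linarith
      then show "inner w x \<le> inner w z" by (simp add: inner_diff_right)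
    qed
  qed
  have onH': "g q \<ge> k2" if "q \<in> H'" for q
  proof -
    have "inner w (q - z) = 0" using that by (simp add: H'_def hl_def inner_diff_right)
    then have "g q = k2 + (inner u (q - z))^2 + k2 * ((Re (q - z))^2 + (Im (q - z))^2)"
      using ident[of q] gz by simp
    moreover have "k2 * ((Re (q - z))^2 + (Im (q - z))^2) \<ge> 0" using k2 by simp
    ultimately show ?thesis by simp
  qed
  have up: "ultraparallel (hl u c) H'"
    unfolding ultraparallel_def
  proof (intro conjI)
    show "hline (hl u c)" by (rule hline_hl[OF u p])
    show "hline H'" by (rule hl')
    show "closure (hl u c) \<inter> closure H' = {}"
    proof (rule ccontr)
      assume "closure (hl u c) \<inter> closure H' \<noteq> {}"
      then obtain x where x1: "x \<in> closure (hl u c)" and x2: "x \<in> closure H'" by blast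
      have "x \<in> {x. inner u x = c} \<inter> cball 0 1" using closure_hl x1 by blast
      then have a1: "inner u x = c" "cmod x \<le> 1" by auto
      have "x \<in> {x. inner w x = inner w z} \<inter> cball 0 1" using closure_hl x2 unfolding H'_def by blast
      then have a2: "inner w x = inner w z" by auto
      have "(Re x)^2 + (Im x)^2 \<le> 1" using a1(2) by (simp add: cmod_power2[symmetric] abs_square_le_1)
      then have "g x \<le> k2" using a1(1) k2 by (simp add: g_def mult_left_le)
      moreover have "g x = k2 + (inner u (x - z))^2 + k2 * ((Re (x - z))^2 + (Im (x - z))^2)"
        using ident[of x] gz a2 by (simp add: inner_diff_right)
      ultimately have "k2 * ((Re (x - z))^2 + (Im (x - z))^2) \<le> 0"
        by (smt (verit) zero_le_power2)
      then have "(Re (x - z))^2 + (Im (x - z))^2 \<le> 0" using k2 by (simp add: mult_le_0_iff)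
      then have "Re (x - z) = 0" "Im (x - z) = 0" by (smt (verit) zero_le_power2 power_zero_numeral zero_eq_power2)+
      then have "x = z" by (simp add: complex_eq_iff)
      then have "inner u z = c" using a1 by simp
      then have "phi u c z = 0" by (simp add: phi_def)
      then show False using k2 k2_def by simp
    qed
  qed
  have hd: "hsetdist (hl u c) H' \<ge> arcosh (sqrt (1+\<sigma>))"
  proof (rule hsetdist_ge)
    show "hl u c \<noteq> {}" using pH by blast
    show "H' \<noteq> {}" using zH' by blast
    fix p' q assume p': "p' \<in> hl u c" and q: "q \<in> H'"
    have p'H: "p' \<in> H2" "inner u p' = c" using p' by (auto simp: hl_def)
    have qH: "q \<in> H2" using q by (auto simp: H'_def hl_def)
    have g1: "lip (kl p') (nrm u c) = 0" using p'H by (simp add: lip_kl_nrm)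
    have gd: "(lip (kl p') (kl q))^2 \<ge> 1 + (lip (kl q) (nrm u c))^2 / \<nu>"
      unfolding \<nu>_def by (rule gram_dist) (use p'H qH g1 nu in \<open>auto simp: lip_kl_self \<nu>_def\<close>)
    have "phi u c q \<ge> k2"
    proof -
      have "g q \<ge> k2" by (rule onH'[OF q])
      then have "(inner u q - c)^2 \<ge> k2 * (1 - (Re q)^2 - (Im q)^2)"
        by (simp add: g_def power2_commute algebra_simps)
      moreover have "1 - (Re q)^2 - (Im q)^2 > 0" using qH by (simp add: H2_iff)
      ultimately show ?thesis by (simp add: phi_def le_divide_eq)
    qed
    then have "(lip (kl q) (nrm u c))^2 \<ge> \<sigma> * \<nu>"
      using phi_lip[OF qH] z(2) z0 big k2_def \<nu>_def by (smt (verit))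
    then have "(lip (kl q) (nrm u c))^2 / \<nu> \<ge> \<sigma>" using nu by (simp add: le_divide_eq)
    then have X: "(lip (kl p') (kl q))^2 \<ge> 1 + \<sigma>" using gd by simp
    show "hdist p' q \<ge> arcosh (sqrt (1+\<sigma>))"
      using hdist_ge[OF p'H(1) qH _ X] sig by simp
  qed
  show ?thesis using sup up hd by blast
qed




lemma compact_in_ball:
  assumes "compact K" "K \<subseteq> H2"
  obtains r where "0 \<le> r" "r < 1" "\<forall>x\<in>K. (Re x)^2 + (Im x)^2 \<le> r"
proof (cases "K = {}")
  case True
  then show ?thesis using that[of 0] by simp
next
  case False
  have "continuous_on K (\<lambda>x. (Re x)^2 + (Im x)^2)" by (intro continuous_intros)
  then obtain m where m: "m \<in> K" "\<forall>x\<in>K. (Re x)^2 + (Im x)^2 \<le> (Re m)^2 + (Im m)^2"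
    using continuous_attains_sup[OF assms(1) False] by blast
  have "(Re m)^2 + (Im m)^2 < 1" using m(1) assms(2) by (auto simp: H2_iff)
  then show ?thesis using that[of "(Re m)^2 + (Im m)^2"] m by simp
qed

lemma hdist_bound:
  assumes "(Re p)^2 + (Im p)^2 \<le> r" "(Re q)^2 + (Im q)^2 \<le> r" "r < 1" "0 \<le> r"
  shows "hdist p q \<le> arcosh (2 / (1 - r))"
proof -
  have pH: "p \<in> H2" "q \<in> H2" using assms by (auto simp: H2_iff)
  have g: "- lip (kl p) (kl q) \<ge> 1" by (rule lip_kl_ge1[OF pH])
  have e: "- lip (kl p) (kl q) = (1 - inner p q) / (rr p * rr q)"
    by (simp add: lip_kl pH minus_divide_left)
  have n: "1 - inner p q \<le> 2"
  proof -
    have "(Re p + Re q)^2 + (Im p + Im q)^2 \<ge> 0" by simp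
    then have "- (Re p * Re q + Im p * Im q) \<le> ((Re p)^2 + (Im p)^2 + (Re q)^2 + (Im q)^2) / 2"
      by (simp add: power2_eq_square algebra_simps)
    then show ?thesis using assms by (simp add: inner_complex_def)
  qed
  have rp: "rr p \<ge> sqrt (1 - r)" "rr q \<ge> sqrt (1 - r)"
    using assms by (auto simp: rr_def intro!: real_sqrt_le_mono)
  have "rr p * rr q \<ge> sqrt (1 - r) * sqrt (1 - r)"
    using rp assms(3) rr_pos[OF pH(1)] by (intro mult_mono) auto
  then have rr: "rr p * rr q \<ge> 1 - r" using assms(3) by simp
  have "1 - inner p q \<ge> 0" using g e rr_pos pH
    by (smt (verit) divide_nonpos_pos mult_pos_pos)
  then have "- lip (kl p) (kl q) \<le> 2 / (1 - r)"
    unfolding e using rr n assms(3) by (intro frac_le) auto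
  moreover have "2 / (1 - r) \<ge> 1" using assms(3,4) by (simp add: le_divide_eq)
  ultimately show ?thesis using g by (simp add: hdist_kl pH not_less[symmetric])
qed

lemma hsetdist_le_pt:
  assumes "H \<subseteq> H2" "H' \<subseteq> H2" "p \<in> H" "q \<in> H'"
  shows "hsetdist H H' \<le> hdist p q"
proof -
  have b1: "bdd_below (hdist x ` H')" if "x \<in> H" for x
    using that assms hdist_nonneg by (intro bdd_belowI[of _ 0]) auto
  have "bdd_below ((\<lambda>x. INF y\<in>H'. hdist x y) ` H)"
  proof (intro bdd_belowI[of _ 0])
    fix t assume "t \<in> (\<lambda>x. INF y\<in>H'. hdist x y) ` H"
    then obtain x where x: "x \<in> H" "t = (INF y\<in>H'. hdist x y)" by blast
    have "0 \<le> (INF y\<in>H'. hdist x y)"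
      using assms(4) x(1) assms(1,2) hdist_nonneg by (intro cINF_greatest) auto
    then show "0 \<le> t" using x by simp
  qed
  then have "hsetdist H H' \<le> (INF y\<in>H'. hdist p y)"
    unfolding hsetdist_def using assms(3) by (rule cINF_lower)
  also have "\<dots> \<le> hdist p q" using b1[OF assms(3)] assms(4) by (rule cINF_lower)
  finally show ?thesis .
qed

lemma width_bdd:
  assumes "compact K" "K \<subseteq> H2" "supporting H K"
  shows "bdd_above (hsetdist H ` {H'. supporting H' K \<and> ultraparallel H H'})"
proof -
  obtain r where r: "0 \<le> r" "r < 1" "\<forall>x\<in>K. (Re x)^2 + (Im x)^2 \<le> r"
    using compact_in_ball[OF assms(1,2)] by blast
  obtain p where p: "p \<in> H" "p \<in> K" using assms(3) by (auto simp: supporting_def)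
  have HH: "H \<subseteq> H2" using assms(3) hline_sub by (auto simp: supporting_def)
  show ?thesis
  proof (intro bdd_aboveI[of _ "arcosh (2 / (1 - r))"])
    fix t assume "t \<in> hsetdist H ` {H'. supporting H' K \<and> ultraparallel H H'}"
    then obtain H' where H': "supporting H' K" "t = hsetdist H H'" by blast
    obtain q where q: "q \<in> H'" "q \<in> K" using H'(1) by (auto simp: supporting_def)
    have "H' \<subseteq> H2" using H'(1) hline_sub by (auto simp: supporting_def)
    then have "t \<le> hdist p q" using hsetdist_le_pt[OF HH _ p(1) q(1)] H'(2) by simp
    also have "\<dots> \<le> arcosh (2 / (1 - r))" using r p q by (intro hdist_bound) auto
    finally show "t \<le> arcosh (2 / (1 - r))" .
  qed
qed

lemma hwidth_ge:
  assumes K: "compact K" "K \<subseteq> H2" and sup: "supporting H K"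
    and Hu: "H = hl u c" "u \<noteq> 0" "\<forall>x\<in>K. inner u x \<le> c"
    and p: "p \<in> H2" "inner u p = c"
    and z0: "z0 \<in> K" and sig: "\<sigma> > 0" and big: "phi u c z0 \<ge> \<sigma> * lip (nrm u c) (nrm u c)"
  shows "hwidth H K \<ge> arcosh (sqrt (1+\<sigma>))"
proof -
  obtain H' where H': "supporting H' K" "ultraparallel (hl u c) H'" "hsetdist (hl u c) H' \<ge> arcosh (sqrt (1+\<sigma>))"
    using tangent[OF K Hu(2,3) p z0 sig big] by blast
  show ?thesis unfolding hwidth_def
    by (rule cSUP_upper2[OF width_bdd[OF K sup], of H']) (use H' Hu(1) in auto)
qed

lemma convex_body_off:
  assumes "convex_body K" "u \<noteq> 0"
  obtains z where "z \<in> K" "inner u z \<noteq> c"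
proof -
  obtain x0 where "x0 \<in> interior K" using assms(1) by (auto simp: convex_body_def)
  then obtain e where e: "e > 0" "ball x0 e \<subseteq> K" by (meson mem_interior)
  have cu: "cmod u > 0" using assms(2) by simp
  define x1 where "x1 = x0 + (e / (2 * cmod u)) *\<^sub>R u"
  have "dist x0 x1 = e / 2" using cu e by (simp add: x1_def dist_norm)
  then have x1: "x1 \<in> K" using e by auto
  have x0: "x0 \<in> K" using e by auto
  have "inner u x1 = inner u x0 + (e / (2 * cmod u)) * (cmod u)^2"
    by (simp add: x1_def inner_add_right power2_norm_eq_inner)
  moreover have "(e / (2 * cmod u)) * (cmod u)^2 > 0" using e cu by simp
  ultimately have "inner u x1 \<noteq> inner u x0" by linarith
  then show ?thesis using that x0 x1 by metis
qed

lemma hwidth_nonneg: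
  assumes K: "convex_body K" and sup: "supporting H K"
  shows "hwidth H K \<ge> 0"
proof -
  obtain u c where uc: "u \<noteq> 0" "H = hl u c" "\<forall>x\<in>K. inner u x \<le> c" "hl u c \<inter> K \<noteq> {}"
    using supporting_hl[OF sup] by blast
  obtain p where p: "p \<in> hl u c" using uc(4) by blast
  have pp: "p \<in> H2" "inner u p = c" using p by (auto simp: hl_def)
  have KK: "compact K" "K \<subseteq> H2" using K by (auto simp: convex_body_def)
  obtain z where z: "z \<in> K" "inner u z \<noteq> c" using convex_body_off[OF K uc(1)] by blast
  have nu: "lip (nrm u c) (nrm u c) > 0" by (rule nu_pos[OF uc(1) pp])
  have "phi u c z > 0"
  proof -
    have "1 - (Re z)^2 - (Im z)^2 > 0" using z KK by (auto simp: H2_iff)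
    moreover have "(inner u z - c)^2 > 0" using z by simp
    ultimately show ?thesis by (simp add: phi_def)
  qed
  define \<sigma> where "\<sigma> = phi u c z / lip (nrm u c) (nrm u c)"
  have s: "\<sigma> > 0" using nu \<open>phi u c z > 0\<close> by (simp add: \<sigma>_def)
  have "phi u c z \<ge> \<sigma> * lip (nrm u c) (nrm u c)" using nu by (simp add: \<sigma>_def)
  then have "hwidth H K \<ge> arcosh (sqrt (1+\<sigma>))"
    by (rule hwidth_ge[OF KK sup uc(2,1,3) pp z(1) s])
  moreover have "arcosh (sqrt (1+\<sigma>)) \<ge> 0" using s by simp
  ultimately show ?thesis by linarith
qed




lemma timelike_future:
  assumes "lip Q Q < 0" "t0 Q > 0" "lip P P < 0" "lip P Q < 0"
  shows "t0 P > 0"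
proof (rule ccontr)
  assume "\<not> t0 P > 0"
  then have p0: "t0 P \<le> 0" by simp
  obtain q0 q1 q2 where Q: "Q = V3 q0 q1 q2" by (cases Q)
  obtain p0' p1 p2 where P: "P = V3 p0' p1 p2" by (cases P)
  have hq: "q1^2 + q2^2 < q0^2" using assms(1) by (simp add: Q lip_def power2_eq_square)
  have hp: "p1^2 + p2^2 < p0'^2" using assms(3) by (simp add: P lip_def power2_eq_square)
  have s: "p1 * q1 + p2 * q2 < p0' * q0" using assms(4) by (simp add: P Q lip_def)
  have q0: "q0 > 0" using assms(2) Q by simp
  have p0'': "p0' \<le> 0" using p0 P by simp
  have "p0' * q0 \<le> 0" using q0 p0'' by (simp add: mult_nonpos_nonneg)
  then have neg: "p1 * q1 + p2 * q2 < 0" using s by linarith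
  have cs: "(p1 * q1 + p2 * q2)^2 \<le> (p1^2 + p2^2) * (q1^2 + q2^2)"
  proof -
    have "(p1^2 + p2^2) * (q1^2 + q2^2) - (p1 * q1 + p2 * q2)^2 = (p1 * q2 - p2 * q1)^2"
      by (simp add: power2_eq_square algebra_simps)
    then show ?thesis by (metis diff_ge_0_iff_ge zero_le_power2)
  qed
  also have "\<dots> \<le> p0'^2 * q0^2" using hp hq by (intro mult_mono) auto
  also have "\<dots> = (p0' * q0)^2" by (simp add: power_mult_distrib)
  finally have "(p1 * q1 + p2 * q2)^2 \<le> (p0' * q0)^2" .
  moreover have "p1 * q1 + p2 * q2 < p0' * q0" by (rule s)
  moreover have "p0' * q0 \<le> 0" by fact
  ultimately show False using neg by (smt (verit) power2_le_iff_abs_le abs_of_neg abs_of_nonpos abs_le_square_iff)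
qed

lemma hsetdist_foot:
  assumes u: "u \<noteq> 0" and p: "p \<in> H2" "inner u p = c" and q: "q \<in> H2" and s: "\<sigma> \<ge> 0"
    and b: "phi u c q \<le> \<sigma> * lip (nrm u c) (nrm u c)" and H': "H' \<subseteq> H2" "q \<in> H'"
  shows "hsetdist (hl u c) H' \<le> arcosh (sqrt (1+\<sigma>))"
proof -
  define n where "n = nrm u c"
  define Q where "Q = kl q"
  define \<beta> where "\<beta> = lip Q n"
  define \<nu> where "\<nu> = lip n n"
  have nu: "\<nu> > 0" unfolding \<nu>_def n_def by (rule nu_pos[OF u p])
  have QQ: "lip Q Q = -1" using q by (simp add: Q_def lip_kl_self)
  have Q0: "t0 Q > 0" using q by (simp add: Q_def t0_kl)
  define P where "P = vadd (vsc \<nu> Q) (vsc (- \<beta>) n)"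
  have nQ: "lip n Q = \<beta>" by (simp add: \<beta>_def lip_sym)
  have Pn: "lip P n = 0" by (simp add: P_def \<beta>_def \<nu>_def)
  have PQ: "lip P Q = - \<nu> - \<beta>^2" using QQ by (simp add: P_def nQ power2_eq_square)
  have PP: "lip P P = - (\<nu> * (\<nu> + \<beta>^2))"
    using QQ by (simp add: P_def nQ \<beta>_def[symmetric] \<nu>_def[symmetric] lip_sym[of n Q] power2_eq_square algebra_simps)
  have PP0: "lip P P < 0" using nu by (simp add: PP) (smt (verit) mult_pos_pos zero_le_power2)
  have PQ0: "lip P Q < 0" using nu by (simp add: PQ) (smt (verit) zero_le_power2)
  have P0: "t0 P > 0" by (rule timelike_future[OF _ Q0 PP0 PQ0]) (simp add: QQ)
  define f where "f = klein P"
  have fH: "f \<in> H2" unfolding f_def by (rule klein_H2[OF P0 PP0])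
  have kf: "kl f = vsc (1 / sqrt (- lip P P)) P" unfolding f_def by (rule kl_klein[OF P0 PP0])
  have "lip (kl f) n = 0" by (simp add: kf Pn)
  then have "(inner u f - c) / rr f = 0" using fH by (simp add: lip_kl_nrm n_def)
  then have fc: "inner u f = c" using rr_pos[OF fH] by simp
  have "(lip (kl f) (kl q))^2 = (lip P Q)^2 / (- lip P P)"
    using PP0 by (simp add: kf Q_def power_divide power_mult_distrib)
  also have "\<dots> = (\<nu> + \<beta>^2)^2 / (\<nu> * (\<nu> + \<beta>^2))" by (simp add: PQ PP power2_eq_square algebra_simps)
  also have "\<dots> = (\<nu> + \<beta>^2) / \<nu>"
  proof -
    have "\<nu> + \<beta>^2 > 0" using nu by (smt (verit) zero_le_power2)
    then show ?thesis by (simp add: power2_eq_square[of "\<nu> + \<beta>^2"])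
  qed
  also have "\<dots> = 1 + \<beta>^2 / \<nu>" using nu by (simp add: add_divide_distrib)
  also have "\<dots> \<le> 1 + \<sigma>"
  proof -
    have "\<beta>^2 = phi u c q" using phi_lip[OF q] by (simp add: \<beta>_def Q_def n_def)
    then have "\<beta>^2 \<le> \<sigma> * \<nu>" using b by (simp add: \<nu>_def n_def)
    then show ?thesis using nu by (simp add: divide_le_eq)
  qed
  finally have hd: "hdist f q \<le> arcosh (sqrt (1+\<sigma>))" by (rule hdist_le[OF fH q s])
  have "hsetdist (hl u c) H' \<le> hdist f q"
    by (rule hsetdist_le_pt) (use H' fH fc in \<open>auto simp: hl_def\<close>)
  then show ?thesis using hd by simp
qed




lemma det_kl: assumes "x \<in> H2" "y \<in> H2" "z \<in> H2"
  shows "det3 (kl x) (kl y) (kl z) = cross2 (y - x) (z - x) / (rr x * rr y * rr z)"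
  using rr_pos[OF assms(1)] rr_pos[OF assms(2)] rr_pos[OF assms(3)]
  by (simp add: det3_def kl_def cross2_def field_simps)

lemma det_kl_nz: assumes "x \<in> H2" "y \<in> H2" "z \<in> H2" "\<not> collinear {x, y, z}"
  shows "det3 (kl x) (kl y) (kl z) \<noteq> 0"
proof -
  have "cross2 (y - x) (z - x) \<noteq> 0" using assms(4) collinear_cross by blast
  moreover have "rr x > 0" "rr y > 0" "rr z > 0" using rr_pos assms(1-3) by auto
  ultimately show ?thesis by (simp add: det_kl assms)
qed

lemma lip_kl_gt1: assumes "p \<in> H2" "q \<in> H2" "p \<noteq> q" shows "- lip (kl p) (kl q) > 1"
proof -
  define a b c d where "a = Re p" "b = Im p" "c = Re q" "d = Im q"
  have h: "a^2 + b^2 < 1" "c^2 + d^2 < 1" using assms by (auto simp: H2_iff a_b_c_d_def)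
  have ne: "(a-c)^2 + (b-d)^2 > 0" using assms(3)
    by (auto simp: a_b_c_d_def complex_eq_iff sum_power2_gt_zero_iff)
  have e: "(1 - a*c - b*d)^2 - (1 - a^2 - b^2) * (1 - c^2 - d^2) = (a-c)^2 + (b-d)^2 - (a*d - b*c)^2"
    by (simp add: power2_eq_square algebra_simps)
  have "((a-c)^2 + (b-d)^2) * (c^2 + d^2) - (a*d - b*c)^2 = ((a-c)*c + (b-d)*d)^2"
    by (simp add: power2_eq_square algebra_simps)
  then have l: "(a*d - b*c)^2 \<le> ((a-c)^2 + (b-d)^2) * (c^2 + d^2)"
    by (metis diff_ge_0_iff_ge zero_le_power2)
  have "0 < ((a-c)^2 + (b-d)^2) * (1 - c^2 - d^2)"
    using h(2) ne by (intro mult_pos_pos) auto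
  then have k: "(1 - a*c - b*d)^2 > (1 - a^2 - b^2) * (1 - c^2 - d^2)"
    using e l by (simp add: algebra_simps)
  have pos: "1 - a*c - b*d > 0" using klein_ineq(2)[OF h] .
  have "- lip (kl p) (kl q) = (1 - a*c - b*d) / (rr p * rr q)"
    by (simp add: lip_kl assms inner_complex_def minus_divide_left a_b_c_d_def)
  moreover have "rr p * rr q = sqrt ((1 - a^2 - b^2) * (1 - c^2 - d^2))"
    by (simp add: rr_def real_sqrt_mult a_b_c_d_def)
  moreover have "sqrt ((1 - a^2 - b^2) * (1 - c^2 - d^2)) < 1 - a*c - b*d"
  proof -
    have "sqrt ((1 - a^2 - b^2) * (1 - c^2 - d^2)) < sqrt ((1 - a*c - b*d)^2)"
      by (rule real_sqrt_less_mono[OF k])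
    then show ?thesis using pos by simp
  qed
  moreover have "rr p * rr q > 0" using rr_pos assms by simp
  ultimately show ?thesis by simp
qed

lemma ellipse_convex:
  assumes "M \<ge> 0"
  shows "convex {x. (inner u x - c)^2 + M * ((Re x)^2 + (Im x)^2) \<le> M}"
  unfolding convex_def
proof (intro ballI allI impI)
  fix x y :: complex and s t :: real
  assume x: "x \<in> {x. (inner u x - c)^2 + M * ((Re x)^2 + (Im x)^2) \<le> M}"
     and y: "y \<in> {x. (inner u x - c)^2 + M * ((Re x)^2 + (Im x)^2) \<le> M}"
     and st: "0 \<le> s" "0 \<le> t" "s + t = 1"
  define f where "f z = (inner u z - c)^2 + M * ((Re z)^2 + (Im z)^2)" for z
  have t: "t = 1 - s" using st by simp
  have id: "f (s *\<^sub>R x + t *\<^sub>R y) = s * f x + t * f y - s * t * ((inner u (x - y))^2 + M * ((Re (x - y))^2 + (Im (x - y))^2))"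
    unfolding t f_def by (simp add: inner_complex_def power2_eq_square algebra_simps)
  have "s * t * ((inner u (x - y))^2 + M * ((Re (x - y))^2 + (Im (x - y))^2)) \<ge> 0"
    using st assms by simp
  moreover have "s * f x + t * f y \<le> s * M + t * M"
    using x y st by (intro add_mono mult_left_mono) (auto simp: f_def)
  moreover have "s * M + t * M = M" by (metis st(3) distrib_right mult_1)
  ultimately have "f (s *\<^sub>R x + t *\<^sub>R y) \<le> M" using id by linarith
  then show "s *\<^sub>R x + t *\<^sub>R y \<in> {x. (inner u x - c)^2 + M * ((Re x)^2 + (Im x)^2) \<le> M}"
    by (simp add: f_def)
qed

lemma hull_H2: "S \<subseteq> H2 \<Longrightarrow> convex hull S \<subseteq> H2"
  by (rule hull_minimal) (auto simp: H2_def)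

lemma convex_body_tri:
  assumes "a \<in> H2" "b \<in> H2" "c \<in> H2" "\<not> collinear {a, b, c}"
  shows "convex_body (convex hull {a, b, c})" "interior (convex hull {a, b, c}) \<noteq> {}"
proof -
  have d: "a \<noteq> b" "a \<noteq> c" "b \<noteq> c" using assms(4) by (auto simp: collinear_2 insert_absorb2 insert_commute)
  have "\<not> affine_dependent {a, b, c}" using assms(4) collinear_3_eq_affine_dependent by blast
  moreover have "card {a, b, c} = Suc DIM(complex)" using d by simp
  ultimately show i: "interior (convex hull {a, b, c}) \<noteq> {}"
    using interior_convex_hull_eq_empty by blast
  show "convex_body (convex hull {a, b, c})"
    unfolding convex_body_def using i assms
    by (auto intro!: hull_H2 finite_imp_compact_convex_hull convex_convex_hull)
qed




lemma nrm_of: "nrm (Complex (t1 n) (t2 n)) (t0 n) = n"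
  by (cases n) (simp add: nrm_def)

lemma lip_sign: "x \<in> H2 \<Longrightarrow> lip (kl x) n = (inner (Complex (t1 n) (t2 n)) x - t0 n) / rr x"
  using lip_kl_nrm[of x "Complex (t1 n) (t2 n)" "t0 n"] by (simp add: nrm_of)

lemma lip_sign_le: "x \<in> H2 \<Longrightarrow> lip (kl x) n \<le> 0 \<longleftrightarrow> inner (Complex (t1 n) (t2 n)) x \<le> t0 n"
  using rr_pos[of x] by (simp add: lip_sign divide_le_0_iff)

lemma lip_sign_eq: "x \<in> H2 \<Longrightarrow> lip (kl x) n = 0 \<longleftrightarrow> inner (Complex (t1 n) (t2 n)) x = t0 n"
  using rr_pos[of x] by (simp add: lip_sign)

lemma nz_u: assumes "x \<in> H2" "lip (kl x) n = 0" "lip V n \<noteq> 0"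
  shows "Complex (t1 n) (t2 n) \<noteq> 0"
proof
  assume "Complex (t1 n) (t2 n) = 0"
  then have n12: "t1 n = 0" "t2 n = 0" by (auto simp: complex_eq_iff)
  then have "lip (kl x) n = - t0 (kl x) * t0 n" by (simp add: lip_def)
  then have "t0 n = 0" using assms(2) t0_kl[OF assms(1)] by simp
  then have "lip V n = 0" using n12 by (simp add: lip_def)
  then show False using assms(3) by simp
qed

lemma thick_le:
  assumes tri: "htriangle a b c"
  shows "thickness (convex hull {a,b,c}) \<le> arcosh (sqrt (1 + (det3 (kl a) (kl b) (kl c))^2 / ((lip (kl a) (kl b))^2 - 1)))"
proof -
  have H: "a \<in> H2" "b \<in> H2" "c \<in> H2" and nc: "\<not> collinear {a,b,c}" using tri by (auto simp: htriangle_def)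
  define A B C where "A = kl a" "B = kl b" "C = kl c"
  define D where "D = det3 A B C"
  have D0: "D \<noteq> 0" unfolding D_def A_B_C_def by (rule det_kl_nz[OF H nc])
  define R where "R = convex hull {a,b,c}"
  have cbR: "convex_body R" unfolding R_def by (rule convex_body_tri(1)[OF H nc])
  have RR: "compact R" "R \<subseteq> H2" using cbR by (auto simp: convex_body_def)
  define n where "n = vsc (- D) (cr A B)"
  define u where "u = Complex (t1 n) (t2 n)"
  define c0 where "c0 = t0 n"
  have nn: "nrm u c0 = n" by (simp add: u_def c0_def nrm_of)
  have An: "lip A n = 0" by (simp add: n_def lip_cr)
  have Bn: "lip B n = 0" by (simp add: n_def lip_cr)
  have Cn: "lip C n = - (D^2)" by (simp add: n_def lip_cr det3_cyc D_def power2_eq_square)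
  have D2: "D^2 > 0" using D0 by simp
  have u0: "u \<noteq> 0" unfolding u_def by (rule nz_u[OF H(1), of n C]) (use An Cn D2 A_B_C_def in auto)
  have ia: "inner u a = c0" using lip_sign_eq[OF H(1), of n] An by (simp add: A_B_C_def u_def c0_def)
  have ib: "inner u b = c0" using lip_sign_eq[OF H(2), of n] Bn by (simp add: A_B_C_def u_def c0_def)
  have ic: "inner u c \<le> c0" using lip_sign_le[OF H(3), of n] Cn by (simp add: A_B_C_def u_def c0_def)
  have half: "\<forall>x\<in>R. inner u x \<le> c0"
  proof -
    have "R \<subseteq> {x. inner u x \<le> c0}" unfolding R_def
      by (rule hull_minimal) (use ia ib ic convex_halfspace_le in auto)
    then show ?thesis by auto
  qed
  define HH where "HH = hl u c0"
  have aR: "a \<in> R" unfolding R_def by (simp add: hull_inc)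
  have cR: "c \<in> R" unfolding R_def by (simp add: hull_inc)
  have sup: "supporting HH R" unfolding supporting_def
  proof (intro conjI exI)
    show "hline HH" unfolding HH_def by (rule hline_hl[OF u0 H(1) ia])
    show "HH \<inter> R \<noteq> {}" using aR H(1) ia by (auto simp: HH_def hl_def)
    show "u \<noteq> 0" by (rule u0)
    show "HH = {x \<in> H2. inner u x = c0}" by (simp add: HH_def hl_def)
    show "\<forall>x\<in>R. inner u x \<le> c0" by (rule half)
  qed
  have x1: "(lip A B)^2 > 1"
  proof -
    have "a \<noteq> b" using nc by auto
    then have "- lip A B > 1" unfolding A_B_C_def by (rule lip_kl_gt1[OF H(1,2)])
    then have "1 < (- lip A B)^2" by (intro one_less_power) auto
    then show ?thesis by simp
  qed
  have nu: "lip n n = D^2 * ((lip A B)^2 - 1)"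
  proof -
    have "lip n n = D^2 * lip (cr A B) (cr A B)" by (simp add: n_def power2_eq_square)
    also have "\<dots> = D^2 * ((lip A B)^2 - 1)" using H by (simp add: lip_cr_cr A_B_C_def lip_kl_self)
    finally show ?thesis .
  qed
  define \<sigma> where "\<sigma> = D^2 / ((lip A B)^2 - 1)"
  have sig: "\<sigma> > 0" using D2 x1 by (simp add: \<sigma>_def)
  have snu: "\<sigma> * lip (nrm u c0) (nrm u c0) = D^4" using x1 by (simp add: nn nu \<sigma>_def power4_eq_xxxx power2_eq_square)
  have phic: "phi u c0 c = D^4" using phi_lip[OF H(3), of u c0] Cn by (simp add: nn A_B_C_def power4_eq_xxxx power2_eq_square)
  define M where "M = D^4"
  have M0: "M \<ge> 0" by (simp add: M_def)
  have RE: "R \<subseteq> {x. (inner u x - c0)^2 + M * ((Re x)^2 + (Im x)^2) \<le> M}"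
    unfolding R_def
  proof (rule hull_minimal)
    show "convex {x. (inner u x - c0)^2 + M * ((Re x)^2 + (Im x)^2) \<le> M}" by (rule ellipse_convex[OF M0])
    have "M * ((Re a)^2 + (Im a)^2) \<le> M" "M * ((Re b)^2 + (Im b)^2) \<le> M"
      using H M0 by (auto simp: H2_iff intro: mult_left_le)
    moreover have "(inner u c - c0)^2 = M * (1 - (Re c)^2 - (Im c)^2)"
    proof -
      have "1 - (Re c)^2 - (Im c)^2 > 0" using H by (simp add: H2_iff)
      then show ?thesis using phic by (simp add: phi_def M_def field_simps)
    qed
    ultimately show "{a, b, c} \<subseteq> {x. (inner u x - c0)^2 + M * ((Re x)^2 + (Im x)^2) \<le> M}"
      using ia ib by (simp add: algebra_simps)
  qed
  have phiR: "phi u c0 x \<le> \<sigma> * lip (nrm u c0) (nrm u c0)" if "x \<in> R" for x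
  proof -
    have xH: "x \<in> H2" using that RR by auto
    have "(inner u x - c0)^2 + M * ((Re x)^2 + (Im x)^2) \<le> M" using RE that by auto
    then have "(inner u x - c0)^2 \<le> M * (1 - (Re x)^2 - (Im x)^2)" by (simp add: algebra_simps)
    moreover have "1 - (Re x)^2 - (Im x)^2 > 0" using xH by (simp add: H2_iff)
    ultimately show ?thesis by (simp add: phi_def snu M_def divide_le_eq)
  qed
  define s where "s = arcosh (sqrt (1 + \<sigma>))"
  have bdd: "bdd_below ((\<lambda>H. hwidth H R) ` {H. supporting H R})"
  proof (rule bdd_belowI2[where m=0])
    fix x assume "x \<in> {H. supporting H R}"
    then show "0 \<le> hwidth x R" using hwidth_nonneg[OF cbR] by simp
  qed
  have "thickness R \<le> hwidth HH R" unfolding thickness_def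
    by (rule cINF_lower[OF bdd]) (use sup in simp)
  also have "hwidth HH R \<le> s" unfolding hwidth_def
  proof (rule cSUP_least)
    obtain H' where "supporting H' R" "ultraparallel (hl u c0) H'"
      using tangent[OF RR u0 half H(1) ia cR sig] phic snu by auto
    then show "{H'. supporting H' R \<and> ultraparallel HH H'} \<noteq> {}" by (auto simp: HH_def)
  next
    fix H' assume "H' \<in> {H'. supporting H' R \<and> ultraparallel HH H'}"
    then have sH': "supporting H' R" by simp
    obtain q where q: "q \<in> H'" "q \<in> R" using sH' by (auto simp: supporting_def)
    have H'H: "H' \<subseteq> H2" using sH' hline_sub by (auto simp: supporting_def)
    show "hsetdist HH H' \<le> s" unfolding HH_def s_def
      by (rule hsetdist_foot[OF u0 H(1) ia _ _ phiR[OF q(2)] H'H q(1)]) (use q RR sig in auto)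
  qed
  finally show ?thesis by (simp add: s_def \<sigma>_def D_def A_B_C_def R_def)
qed




lemma binet: "lip (cr X Y) (cr Z W) = lip X W * lip Y Z - lip X Z * lip Y W"
  by (simp add: lip_def cr_def algebra_simps)

lemma yineq:
  fixes x z w :: real
  assumes "x > 1" "z > 1" "w > 1"
  shows "(x - w)^2 + 2 * (z - 1) < (max x (max z w))^2 - 1"
proof -
  consider "max x (max z w) = x" "z \<le> x" "w \<le> x" | "max x (max z w) = z" "x \<le> z" "w \<le> z"
    | "max x (max z w) = w" "x \<le> w" "z \<le> w" by linarith
  then show ?thesis
  proof cases
    case 1
    have "(x - w)^2 + 2 * (z - 1) - (x^2 - 1) = w^2 - 2*x*w + 2*z - 1" by (simp add: power2_eq_square algebra_simps)
    also have "\<dots> \<le> w^2 - 2*x*w + 2*x - 1" using 1 by simp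
    also have "\<dots> = (w - 1) * (w + 1 - 2*x)" by (simp add: power2_eq_square algebra_simps)
    also have "\<dots> < 0" using 1 assms by (intro mult_pos_neg) auto
    finally show ?thesis using 1 by simp
  next
    case 2
    have "\<bar>x - w\<bar> < z - 1" using 2 assms by auto
    have "(x - w)^2 = \<bar>x - w\<bar>^2" by simp
    also have "\<dots> < (z - 1)^2" by (rule power_strict_mono) (use \<open>\<bar>x - w\<bar> < z - 1\<close> in auto)
    finally have "(x - w)^2 < (z - 1)^2" .
    then show ?thesis using 2 by (simp add: power2_eq_square algebra_simps)
  next
    case 3
    have "(x - w)^2 + 2 * (z - 1) - (w^2 - 1) = x^2 - 2*x*w + 2*z - 1" by (simp add: power2_eq_square algebra_simps)
    also have "\<dots> \<le> x^2 - 2*x*w + 2*w - 1" using 3 by simp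
    also have "\<dots> = (x - 1) * (x + 1 - 2*w)" by (simp add: power2_eq_square algebra_simps)
    also have "\<dots> < 0" using 3 assms by (intro mult_pos_neg) auto
    finally show ?thesis using 3 by simp
  qed
qed

lemma klein_comb:
  assumes "a \<in> H2" "b \<in> H2" "\<epsilon> \<ge> 0"
  shows "\<exists>\<mu>. 0 \<le> \<mu> \<and> \<mu> \<le> 1 \<and> klein (vadd (kl a) (vsc \<epsilon> (kl b))) = \<mu> *\<^sub>R a + (1 - \<mu>) *\<^sub>R b"
proof -
  have ra: "rr a > 0" and rb: "rr b > 0" using rr_pos assms by auto
  define s where "s = 1 / rr a + \<epsilon> / rr b"
  have s: "s > 0" using ra rb assms(3) by (simp add: s_def add_pos_nonneg)
  define \<mu> where "\<mu> = (1 / rr a) / s"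
  have m1: "0 \<le> \<mu>" using ra s by (simp add: \<mu>_def)
  have "1 / rr a \<le> s" using rb assms(3) by (simp add: s_def)
  then have m2: "\<mu> \<le> 1" using s unfolding \<mu>_def by (simp only: divide_le_eq_1) simp
  have "1 - \<mu> = (s - 1 / rr a) / s" using s by (simp add: \<mu>_def diff_divide_distrib)
  then have "1 - \<mu> = (\<epsilon> / rr b) / s" by (simp add: s_def)
  then have m3: "1 - \<mu> = (\<epsilon> / rr b) / s" .
  define V where "V = vadd (kl a) (vsc \<epsilon> (kl b))"
  have V: "t0 V = s" "t1 V = Re a / rr a + \<epsilon> * (Re b / rr b)" "t2 V = Im a / rr a + \<epsilon> * (Im b / rr b)"
    by (simp_all add: V_def vadd_def vsc_def kl_def s_def)
  have "Re (klein V) = \<mu> * Re a + (1 - \<mu>) * Re b"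
    unfolding m3 using s ra rb by (simp add: klein_def V \<mu>_def field_simps)
  moreover have "Im (klein V) = \<mu> * Im a + (1 - \<mu>) * Im b"
    unfolding m3 using s ra rb by (simp add: klein_def V \<mu>_def field_simps)
  ultimately have "klein (vadd (kl a) (vsc \<epsilon> (kl b))) = \<mu> *\<^sub>R a + (1 - \<mu>) *\<^sub>R b"
    by (simp add: complex_eq_iff V_def)
  then show ?thesis using m1 m2 by blast
qed

lemma comb_timelike:
  assumes "lip A A = -1" "lip B B = -1" "lip A B < 0" "t0 A > 0" "t0 B > 0" "\<epsilon> \<ge> 0"
  shows "lip (vadd A (vsc \<epsilon> B)) (vadd A (vsc \<epsilon> B)) < 0" "t0 (vadd A (vsc \<epsilon> B)) > 0"
proof -
  have "lip (vadd A (vsc \<epsilon> B)) (vadd A (vsc \<epsilon> B)) = -1 + 2 * \<epsilon> * lip A B - \<epsilon>^2"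
    using assms by (simp add: lip_sym[of B A] power2_eq_square algebra_simps)
  also have "\<dots> < 0" using assms(3,6) by (smt (verit) mult_nonneg_nonpos zero_le_power2 mult_nonneg_nonneg)
  finally show "lip (vadd A (vsc \<epsilon> B)) (vadd A (vsc \<epsilon> B)) < 0" .
  show "t0 (vadd A (vsc \<epsilon> B)) > 0" using assms by (simp add: vadd_def vsc_def add_pos_nonneg)
qed

lemma exists_supporting:
  assumes "convex_body K" shows "\<exists>H. supporting H K"
proof -
  have K: "compact K" "K \<subseteq> H2" "K \<noteq> {}" using assms by (auto simp: convex_body_def)
  have "continuous_on K Re" by (intro continuous_intros)
  then obtain z where z: "z \<in> K" "\<forall>x\<in>K. Re x \<le> Re z" using continuous_attains_sup[OF K(1,3)] by blast
  have i: "inner 1 x = Re x" for x :: complex by (simp add: inner_complex_def)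
  have zH: "z \<in> H2" using z K by auto
  have "supporting (hl 1 (Re z)) K" unfolding supporting_def
  proof (intro conjI exI)
    show "hline (hl 1 (Re z))" by (rule hline_hl) (use zH i in auto)
    show "hl 1 (Re z) \<inter> K \<noteq> {}" using z zH by (auto simp: hl_def i)
    show "(1::complex) \<noteq> 0" by simp
    show "hl 1 (Re z) = {x \<in> H2. inner 1 x = Re z}" by (simp add: hl_def)
    show "\<forall>x\<in>K. inner 1 x \<le> Re z" using z by (simp add: i)
  qed
  then show ?thesis by blast
qed




definition good :: "v3 \<Rightarrow> v3 \<Rightarrow> v3 \<Rightarrow> real \<Rightarrow> real \<Rightarrow> bool" where
  "good A B C \<sigma> \<epsilon> \<longleftrightarrow>
     (det3 A B C)^4 \<ge> \<sigma> * lip (nA A B C \<epsilon>) (nA A B C \<epsilon>) \<and>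
     (det3 A C B)^4 \<ge> \<sigma> * lip (nA A C B \<epsilon>) (nA A C B \<epsilon>) \<and>
     (lip (vadd A (vsc \<epsilon> C)) (nB A B C))^2 \<ge> \<sigma> * lip (nB A B C) (nB A B C) * (- lip (vadd A (vsc \<epsilon> C)) (vadd A (vsc \<epsilon> C))) \<and>
     (lip (vadd A (vsc \<epsilon> C)) (nBC A B C))^2 \<ge> \<sigma> * lip (nBC A B C) (nBC A B C) * (- lip (vadd A (vsc \<epsilon> C)) (vadd A (vsc \<epsilon> C))) \<and>
     (lip (vadd A (vsc \<epsilon> B)) (nB A C B))^2 \<ge> \<sigma> * lip (nB A C B) (nB A C B) * (- lip (vadd A (vsc \<epsilon> B)) (vadd A (vsc \<epsilon> B))) \<and>
     (lip (vadd A (vsc \<epsilon> B)) (nBC A C B))^2 \<ge> \<sigma> * lip (nBC A C B) (nBC A C B) * (- lip (vadd A (vsc \<epsilon> B)) (vadd A (vsc \<epsilon> B)))"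

lemma ev_pos:
  assumes "isCont f 0" "f 0 > (0::real)"
  shows "\<forall>\<^sub>F e in at_right 0. f e > 0"
proof -
  have "continuous (at 0 within {0<..}) f" by (rule continuous_at_imp_continuous_at_within[OF assms(1)])
  then have "(f \<longlongrightarrow> f 0) (at_right 0)" by (simp add: continuous_within)
  then show ?thesis using assms(2) by (rule order_tendstoD(1))
qed

lemma norms0:
  assumes u: "lip A A = -1" "lip B B = -1" "lip C C = -1"
  shows "lip (nA A B C 0) (nA A B C 0) = (det3 A B C)^2 * ((lip A B - lip A C)^2 - 2 * lip B C - 2)"
    "lip (nA A C B 0) (nA A C B 0) = (det3 A B C)^2 * ((lip A B - lip A C)^2 - 2 * lip B C - 2)"
    "lip (nB A B C) (nB A B C) = (det3 A B C)^2 * ((lip B C - lip A B)^2 - 2 * lip A C - 2)"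
    "lip (nBC A B C) (nBC A B C) = (det3 A B C)^2 * ((lip B C)^2 - 1)"
    "lip (nB A C B) (nB A C B) = (det3 A B C)^2 * ((lip B C - lip A C)^2 - 2 * lip A B - 2)"
    "lip (nBC A C B) (nBC A C B) = (det3 A B C)^2 * ((lip B C)^2 - 1)"
proof -
  have dp: "det3 A C B = - det3 A B C" by (simp add: det3_def algebra_simps)
  show "lip (nA A B C 0) (nA A B C 0) = (det3 A B C)^2 * ((lip A B - lip A C)^2 - 2 * lip B C - 2)"
    using u by (simp add: nA_def binet lip_sym[of B A] lip_sym[of C A] lip_sym[of C B] power2_eq_square algebra_simps)
  show "lip (nA A C B 0) (nA A C B 0) = (det3 A B C)^2 * ((lip A B - lip A C)^2 - 2 * lip B C - 2)"
    using u by (simp add: nA_def dp binet lip_sym[of B A] lip_sym[of C A] lip_sym[of C B] power2_eq_square algebra_simps)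
  show "lip (nB A B C) (nB A B C) = (det3 A B C)^2 * ((lip B C - lip A B)^2 - 2 * lip A C - 2)"
    using u by (simp add: nB_def binet lip_sym[of B A] lip_sym[of C A] lip_sym[of C B] power2_eq_square algebra_simps)
  show "lip (nBC A B C) (nBC A B C) = (det3 A B C)^2 * ((lip B C)^2 - 1)"
    using u by (simp add: nBC_def binet lip_sym[of B A] lip_sym[of C A] lip_sym[of C B] power2_eq_square algebra_simps)
  show "lip (nB A C B) (nB A C B) = (det3 A B C)^2 * ((lip B C - lip A C)^2 - 2 * lip A B - 2)"
    using u by (simp add: nB_def dp binet lip_sym[of B A] lip_sym[of C A] lip_sym[of C B] power2_eq_square algebra_simps)
  show "lip (nBC A C B) (nBC A C B) = (det3 A B C)^2 * ((lip B C)^2 - 1)"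
    using u by (simp add: nBC_def dp binet lip_sym[of B A] lip_sym[of C A] lip_sym[of C B] power2_eq_square algebra_simps)
qed

lemma key_real:
  fixes D2 Mm Y :: real
  assumes "D2 > 0" "Mm > 0" "Y < Mm"
  shows "(D2 / Mm) * (D2 * Y) < D2 * D2"
proof -
  have "(D2 / Mm) * (D2 * Y) = D2 * D2 * (Y / Mm)" by (simp add: field_simps)
  also have "\<dots> < D2 * D2 * 1" using assms by (intro mult_strict_left_mono) auto
  finally show ?thesis by simp
qed

lemma eps_exists:
  assumes u: "lip A A = -1" "lip B B = -1" "lip C C = -1"
    and l: "lip A B < -1" "lip B C < -1" "lip A C < -1" and D: "det3 A B C \<noteq> 0"
    and M: "M = max (- lip A B) (max (- lip B C) (- lip A C))"
    and s: "\<sigma> = (det3 A B C)^2 / (M^2 - 1)" and zM: "- lip B C < M"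
  shows "\<exists>\<epsilon>>0. good A B C \<sigma> \<epsilon>"
proof -
  define x z w where "x = - lip A B" "z = - lip B C" "w = - lip A C"
  define D2 where "D2 = (det3 A B C)^2"
  have d2: "D2 > 0" using D by (simp add: D2_def)
  have d4: "(det3 A B C)^4 = D2 * D2" by (simp add: D2_def power4_eq_xxxx power2_eq_square)
  have dp: "det3 A C B = - det3 A B C" by (simp add: det3_def algebra_simps)
  have d4': "(det3 A C B)^4 = D2 * D2" using d4 by (simp add: dp)
  have xzw: "x > 1" "z > 1" "w > 1" using l by (auto simp: x_z_w_def)
  have MM: "M = max x (max z w)" using M by (simp add: x_z_w_def)
  have Mm: "M^2 - 1 > 0" using MM xzw by (smt (verit) one_less_power zero_less_numeral)
  have sD: "\<sigma> = D2 / (M^2 - 1)" using s by (simp add: D2_def)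
  note N0 = norms0[OF u]
  have la: "lip A (nB A B C) = - D2" "lip A (nBC A B C) = - D2" "lip A (nB A C B) = - D2" "lip A (nBC A C B) = - D2"
    by (simp_all add: nB_def nBC_def lip_cr dp D2_def power2_eq_square)
  define F1 where "F1 \<epsilon> = (det3 A B C)^4 - \<sigma> * lip (nA A B C \<epsilon>) (nA A B C \<epsilon>)" for \<epsilon>
  define F2 where "F2 \<epsilon> = (det3 A C B)^4 - \<sigma> * lip (nA A C B \<epsilon>) (nA A C B \<epsilon>)" for \<epsilon>
  define F3 where "F3 \<epsilon> = (lip (vadd A (vsc \<epsilon> C)) (nB A B C))^2 - \<sigma> * lip (nB A B C) (nB A B C) * (- lip (vadd A (vsc \<epsilon> C)) (vadd A (vsc \<epsilon> C)))" for \<epsilon>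
  define F4 where "F4 \<epsilon> = (lip (vadd A (vsc \<epsilon> C)) (nBC A B C))^2 - \<sigma> * lip (nBC A B C) (nBC A B C) * (- lip (vadd A (vsc \<epsilon> C)) (vadd A (vsc \<epsilon> C)))" for \<epsilon>
  define F5 where "F5 \<epsilon> = (lip (vadd A (vsc \<epsilon> B)) (nB A C B))^2 - \<sigma> * lip (nB A C B) (nB A C B) * (- lip (vadd A (vsc \<epsilon> B)) (vadd A (vsc \<epsilon> B)))" for \<epsilon>
  define F6 where "F6 \<epsilon> = (lip (vadd A (vsc \<epsilon> B)) (nBC A C B))^2 - \<sigma> * lip (nBC A C B) (nBC A C B) * (- lip (vadd A (vsc \<epsilon> B)) (vadd A (vsc \<epsilon> B)))" for \<epsilon>
  have c1: "isCont F1 0" unfolding F1_def nA_def lip_vsc1 lip_vsc2 lip_vadd1 lip_vadd2 by (intro continuous_intros)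
  have c2: "isCont F2 0" unfolding F2_def nA_def lip_vsc1 lip_vsc2 lip_vadd1 lip_vadd2 by (intro continuous_intros)
  have c3: "isCont F3 0" unfolding F3_def lip_vsc1 lip_vsc2 lip_vadd1 lip_vadd2 by (intro continuous_intros)
  have c4: "isCont F4 0" unfolding F4_def lip_vsc1 lip_vsc2 lip_vadd1 lip_vadd2 by (intro continuous_intros)
  have c5: "isCont F5 0" unfolding F5_def lip_vsc1 lip_vsc2 lip_vadd1 lip_vadd2 by (intro continuous_intros)
  have c6: "isCont F6 0" unfolding F6_def lip_vsc1 lip_vsc2 lip_vadd1 lip_vadd2 by (intro continuous_intros)
  have Ya: "(x - w)^2 + 2 * (z - 1) < M^2 - 1" using yineq[OF xzw] MM by simp
  have Yb: "(z - x)^2 + 2 * (w - 1) < M^2 - 1" using yineq[of z w x] xzw MM by (simp add: max.commute max.left_commute)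
  have Yc: "(z - w)^2 + 2 * (x - 1) < M^2 - 1" using yineq[of z x w] xzw MM by (simp add: max.commute max.left_commute)
  have Yz: "z^2 - 1 < M^2 - 1"
  proof -
    have "z < M" using zM by (simp add: x_z_w_def)
    then have "z^2 < M^2" using xzw by (intro power_strict_mono) auto
    then show ?thesis by simp
  qed
  have v0: "vadd A (vsc 0 X) = A" for X by (cases A) (simp add: vadd_def vsc_def)
  have f1: "F1 0 > 0"
  proof -
    have "F1 0 = D2 * D2 - (D2 / (M^2 - 1)) * (D2 * ((x - w)^2 + 2 * (z - 1)))"
      by (simp add: F1_def d4 sD N0 x_z_w_def D2_def power2_eq_square algebra_simps)
    then show ?thesis using key_real[OF d2 Mm Ya] by simp
  qed
  have f2: "F2 0 > 0"
  proof -
    have "F2 0 = D2 * D2 - (D2 / (M^2 - 1)) * (D2 * ((x - w)^2 + 2 * (z - 1)))"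
      by (simp add: F2_def d4' sD N0 x_z_w_def D2_def power2_eq_square algebra_simps)
    then show ?thesis using key_real[OF d2 Mm Ya] by simp
  qed
  have f3: "F3 0 > 0"
  proof -
    have "F3 0 = D2 * D2 - (D2 / (M^2 - 1)) * (D2 * ((z - x)^2 + 2 * (w - 1)))"
      by (simp add: F3_def v0 u la sD N0 x_z_w_def D2_def power2_eq_square algebra_simps)
    then show ?thesis using key_real[OF d2 Mm Yb] by simp
  qed
  have f4: "F4 0 > 0"
  proof -
    have "F4 0 = D2 * D2 - (D2 / (M^2 - 1)) * (D2 * (z^2 - 1))"
      by (simp add: F4_def v0 u la sD N0 x_z_w_def D2_def power2_eq_square algebra_simps)
    then show ?thesis using key_real[OF d2 Mm Yz] by simp
  qed
  have f5: "F5 0 > 0"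
  proof -
    have "F5 0 = D2 * D2 - (D2 / (M^2 - 1)) * (D2 * ((z - w)^2 + 2 * (x - 1)))"
      by (simp add: F5_def v0 u la sD N0 x_z_w_def D2_def power2_eq_square algebra_simps)
    then show ?thesis using key_real[OF d2 Mm Yc] by simp
  qed
  have f6: "F6 0 > 0"
  proof -
    have "F6 0 = D2 * D2 - (D2 / (M^2 - 1)) * (D2 * (z^2 - 1))"
      by (simp add: F6_def v0 u la sD N0 x_z_w_def D2_def power2_eq_square algebra_simps)
    then show ?thesis using key_real[OF d2 Mm Yz] by simp
  qed
  have "\<forall>\<^sub>F e in at_right 0. F1 e > 0 \<and> F2 e > 0 \<and> F3 e > 0 \<and> F4 e > 0 \<and> F5 e > 0 \<and> F6 e > 0"
    using ev_pos[OF c1 f1] ev_pos[OF c2 f2] ev_pos[OF c3 f3] ev_pos[OF c4 f4] ev_pos[OF c5 f5] ev_pos[OF c6 f6]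
    by (intro eventually_conj) auto
  then obtain b where b: "b > 0" "\<forall>e>0. e < b \<longrightarrow> F1 e > 0 \<and> F2 e > 0 \<and> F3 e > 0 \<and> F4 e > 0 \<and> F5 e > 0 \<and> F6 e > 0"
    unfolding eventually_at_right_field by auto
  define e where "e = b / 2"
  have e: "e > 0" "e < b" using b by (auto simp: e_def)
  then have "F1 e > 0 \<and> F2 e > 0 \<and> F3 e > 0 \<and> F4 e > 0 \<and> F5 e > 0 \<and> F6 e > 0" using b by blast
  then have "good A B C \<sigma> e"
    unfolding good_def F1_def F2_def F3_def F4_def F5_def F6_def by (simp add: algebra_simps)
  then show ?thesis using e by blast
qed




lemma fixed_facts:
  assumes u: "lip A A = -1" "lip B B = -1" "lip C C = -1"
    and l: "lip A B < -1" "lip B C < -1" "lip A C < -1" and D: "det3 A B C \<noteq> 0"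
    and M: "M = max (- lip A B) (max (- lip B C) (- lip A C))"
    and s: "\<sigma> = (det3 A B C)^2 / (M^2 - 1)"
  shows "(det3 A B C)^2 \<ge> \<sigma> * ((lip A B)^2 - 1)" "(det3 A C B)^2 \<ge> \<sigma> * ((lip A C)^2 - 1)"
    "(det3 A B C)^4 \<ge> \<sigma> * lip (nB A B C) (nB A B C)" "(det3 A C B)^4 \<ge> \<sigma> * lip (nB A C B) (nB A C B)"
    "\<sigma> > 0"
proof -
  define x z w where "x = - lip A B" "z = - lip B C" "w = - lip A C"
  define D2 where "D2 = (det3 A B C)^2"
  have d2: "D2 > 0" using D by (simp add: D2_def)
  have d4: "(det3 A B C)^4 = D2 * D2" by (simp add: D2_def power4_eq_xxxx power2_eq_square)
  have dp: "det3 A C B = - det3 A B C" by (simp add: det3_def algebra_simps)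
  have xzw: "x > 1" "z > 1" "w > 1" using l by (auto simp: x_z_w_def)
  have MM: "M = max x (max z w)" using M by (simp add: x_z_w_def)
  have Mm: "M^2 - 1 > 0" using MM xzw by (smt (verit) one_less_power zero_less_numeral)
  have sD: "\<sigma> = D2 / (M^2 - 1)" using s by (simp add: D2_def)
  show "\<sigma> > 0" using sD d2 Mm by simp
  have hgen: "D2 \<ge> \<sigma> * (L^2 - 1)" if "L \<ge> 1" "L \<le> M" for L
  proof -
    have "L^2 \<le> M^2" using that by (intro power_mono) auto
    then have "L^2 - 1 \<le> M^2 - 1" by simp
    then have "(L^2 - 1) / (M^2 - 1) \<le> 1" using Mm by simp
    then have "D2 * ((L^2 - 1) / (M^2 - 1)) \<le> D2 * 1" using d2 by (intro mult_left_mono) auto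
    then show ?thesis by (simp add: sD field_simps)
  qed
  show "(det3 A B C)^2 \<ge> \<sigma> * ((lip A B)^2 - 1)"
    using hgen[of x] xzw MM by (simp add: D2_def x_z_w_def)
  show "(det3 A C B)^2 \<ge> \<sigma> * ((lip A C)^2 - 1)"
    using hgen[of w] xzw MM by (simp add: D2_def x_z_w_def dp)
  note N0 = norms0[OF u]
  have Yb: "(z - x)^2 + 2 * (w - 1) < M^2 - 1" using yineq[of z w x] xzw MM by (simp add: max.commute max.left_commute)
  have Yc: "(z - w)^2 + 2 * (x - 1) < M^2 - 1" using yineq[of z x w] xzw MM by (simp add: max.commute max.left_commute)
  have "\<sigma> * lip (nB A B C) (nB A B C) = (D2 / (M^2 - 1)) * (D2 * ((z - x)^2 + 2 * (w - 1)))"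
    by (simp add: sD N0 x_z_w_def D2_def power2_eq_square algebra_simps)
  then show "(det3 A B C)^4 \<ge> \<sigma> * lip (nB A B C) (nB A B C)" using key_real[OF d2 Mm Yb] d4 by simp
  have "\<sigma> * lip (nB A C B) (nB A C B) = (D2 / (M^2 - 1)) * (D2 * ((z - w)^2 + 2 * (x - 1)))"
    by (simp add: sD N0 x_z_w_def D2_def power2_eq_square algebra_simps)
  then show "(det3 A C B)^4 \<ge> \<sigma> * lip (nB A C B) (nB A C B)" using key_real[OF d2 Mm Yc] d4 dp by simp
qed




lemma main_case:
  assumes tri: "htriangle a b c" and red: "reduced (convex hull {a,b,c})"
    and lt: "- lip (kl b) (kl c) < max (- lip (kl a) (kl b)) (max (- lip (kl b) (kl c)) (- lip (kl a) (kl c)))"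
  shows False
proof -
  have H: "a \<in> H2" "b \<in> H2" "c \<in> H2" and nc: "\<not> collinear {a,b,c}" using tri by (auto simp: htriangle_def)
  have dab: "a \<noteq> b" "a \<noteq> c" "b \<noteq> c" using nc by (auto simp: collinear_2 insert_absorb2 insert_commute)
  define A B C where "A = kl a" "B = kl b" "C = kl c"
  have u: "lip A A = -1" "lip B B = -1" "lip C C = -1" using H by (simp_all add: A_B_C_def lip_kl_self)
  have t0s: "t0 A > 0" "t0 B > 0" "t0 C > 0" using H t0_kl A_B_C_def by auto
  have l: "lip A B < -1" "lip B C < -1" "lip A C < -1"
    using lip_kl_gt1[OF H(1,2) dab(1)] lip_kl_gt1[OF H(2,3) dab(3)] lip_kl_gt1[OF H(1,3) dab(2)]
    by (auto simp: A_B_C_def)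
  define D where "D = det3 A B C"
  have D0: "det3 A B C \<noteq> 0" using det_kl_nz[OF H nc] by (simp add: A_B_C_def)
  have dp: "det3 A C B = - det3 A B C" "det3 B A C = - det3 A B C" by (simp_all add: det3_def algebra_simps)
  define M where "M = max (- lip A B) (max (- lip B C) (- lip A C))"
  define \<sigma> where "\<sigma> = (det3 A B C)^2 / (M^2 - 1)"
  note ff = fixed_facts[OF u l D0 M_def \<sigma>_def]
  have sig: "\<sigma> > 0" by (rule ff(5))
  define s where "s = arcosh (sqrt (1 + \<sigma>))"
  define R where "R = convex hull {a,b,c}"
  have cbR: "convex_body R" unfolding R_def by (rule convex_body_tri(1)[OF H nc])
  have thR: "thickness R \<le> s"
  proof -
    have t1: "thickness R \<le> arcosh (sqrt (1 + (det3 A B C)^2 / ((lip A B)^2 - 1)))"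
      using thick_le[OF tri] by (simp add: R_def A_B_C_def)
    have tri2: "htriangle b c a" using tri by (auto simp: htriangle_def insert_commute)
    have t2: "thickness R \<le> arcosh (sqrt (1 + (det3 A B C)^2 / ((lip B C)^2 - 1)))"
      using thick_le[OF tri2] by (simp add: R_def A_B_C_def insert_commute det3_cyc)
    have tri3: "htriangle c a b" using tri by (auto simp: htriangle_def insert_commute)
    have t3: "thickness R \<le> arcosh (sqrt (1 + (det3 A B C)^2 / ((lip A C)^2 - 1)))"
      using thick_le[OF tri3] by (simp add: R_def A_B_C_def insert_commute det3_cyc lip_sym[of "kl c" "kl a"])
    have "M = - lip A B \<or> M = - lip B C \<or> M = - lip A C" by (auto simp: M_def max_def)
    then show ?thesis using t1 t2 t3 by (auto simp: s_def \<sigma>_def)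
  qed
  have lt': "- lip B C < M" using lt by (simp add: M_def A_B_C_def)
  obtain \<epsilon> where e: "\<epsilon> > 0" "good A B C \<sigma> \<epsilon>" using eps_exists[OF u l D0 M_def \<sigma>_def lt'] by blast
  note g = e(2)[unfolded good_def]
  define A1 A2 where "A1 = vadd A (vsc \<epsilon> B)" "A2 = vadd A (vsc \<epsilon> C)"
  have lab: "lip A B < 0" "lip A C < 0" using l by auto
  have A1t: "lip A1 A1 < 0" "t0 A1 > 0" using comb_timelike[OF u(1,2) lab(1) t0s(1,2)] e(1) by (auto simp: A1_A2_def)
  have A2t: "lip A2 A2 < 0" "t0 A2 > 0" using comb_timelike[OF u(1,3) lab(2) t0s(1,3)] e(1) by (auto simp: A1_A2_def)
  define a1 a2 where "a1 = klein A1" "a2 = klein A2"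
  have a1H: "a1 \<in> H2" unfolding a1_a2_def by (rule klein_H2[OF A1t(2,1)])
  have a2H: "a2 \<in> H2" unfolding a1_a2_def by (rule klein_H2[OF A2t(2,1)])
  define k1 k2 where "k1 = 1 / sqrt (- lip A1 A1)" "k2 = 1 / sqrt (- lip A2 A2)"
  have k: "k1 > 0" "k2 > 0" using A1t A2t by (auto simp: k1_k2_def)
  have ka1: "kl a1 = vsc k1 A1" unfolding a1_a2_def k1_k2_def by (rule kl_klein[OF A1t(2,1)])
  have ka2: "kl a2 = vsc k2 A2" unfolding a1_a2_def k1_k2_def by (rule kl_klein[OF A2t(2,1)])
  have k1sq: "k1^2 = 1 / (- lip A1 A1)" using A1t by (simp add: k1_k2_def power_divide)
  have k2sq: "k2^2 = 1 / (- lip A2 A2)" using A2t by (simp add: k1_k2_def power_divide)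
  have a1R: "a1 \<in> R"
  proof -
    obtain \<mu> where "0 \<le> \<mu>" "\<mu> \<le> 1" "a1 = \<mu> *\<^sub>R a + (1 - \<mu>) *\<^sub>R b"
      using klein_comb[OF H(1,2), of \<epsilon>] e(1) by (auto simp: a1_a2_def A1_A2_def A_B_C_def)
    moreover have "a \<in> R" "b \<in> R" by (auto simp: R_def hull_inc)
    ultimately show ?thesis unfolding R_def by (auto intro!: convexD[OF convex_convex_hull])
  qed
  have a2R: "a2 \<in> R"
  proof -
    obtain \<mu> where "0 \<le> \<mu>" "\<mu> \<le> 1" "a2 = \<mu> *\<^sub>R a + (1 - \<mu>) *\<^sub>R c"
      using klein_comb[OF H(1,3), of \<epsilon>] e(1) by (auto simp: a1_a2_def A1_A2_def A_B_C_def)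
    moreover have "a \<in> R" "c \<in> R" by (auto simp: R_def hull_inc)
    ultimately show ?thesis unfolding R_def by (auto intro!: convexD[OF convex_convex_hull])
  qed
  define Z where "Z = convex hull {a1, a2, b, c}"
  have ZR: "Z \<subseteq> R" unfolding Z_def
    by (rule hull_minimal) (use a1R a2R in \<open>auto simp: R_def hull_inc convex_convex_hull\<close>)
  have ZH: "Z \<subseteq> H2" unfolding Z_def by (rule hull_H2) (use a1H a2H H in auto)
  have vZ: "a1 \<in> Z" "a2 \<in> Z" "b \<in> Z" "c \<in> Z" by (auto simp: Z_def hull_inc)
  have aZ: "a \<notin> Z"
  proof
    assume aZ: "a \<in> Z"
    define N where "N = nA A B C \<epsilon>"
    have n1: "lip A1 N = 0" by (simp add: N_def nA_def A1_A2_def lip_cr dp algebra_simps)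
    have n2: "lip A2 N = 0" by (simp add: N_def nA_def A1_A2_def lip_cr dp det3_cyc algebra_simps)
    have nb: "lip B N = - ((det3 A B C)^2)" by (simp add: N_def nA_def lip_cr dp power2_eq_square)
    have nc': "lip C N = - ((det3 A B C)^2)" by (simp add: N_def nA_def lip_cr dp det3_cyc power2_eq_square)
    have na: "lip A N = \<epsilon> * (det3 A B C)^2" by (simp add: N_def nA_def lip_cr power2_eq_square)
    define u' c' where "u' = Complex (t1 N) (t2 N)" "c' = t0 N"
    have "lip (kl a1) N \<le> 0" "lip (kl a2) N \<le> 0" "lip (kl b) N \<le> 0" "lip (kl c) N \<le> 0"
      using n1 n2 nb nc' by (simp_all add: ka1 ka2 A_B_C_def[symmetric])
    then have "inner u' a1 \<le> c'" "inner u' a2 \<le> c'" "inner u' b \<le> c'" "inner u' c \<le> c'"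
      using lip_sign_le a1H a2H H by (auto simp: u'_c'_def)
    then have "Z \<subseteq> {x. inner u' x \<le> c'}" unfolding Z_def
      by (intro hull_minimal) (auto intro: convex_halfspace_le)
    then have "inner u' a \<le> c'" using aZ by auto
    then have "lip (kl a) N \<le> 0" using lip_sign_le[OF H(1)] by (simp add: u'_c'_def)
    moreover have "lip (kl a) N > 0" using na e(1) D0 by (simp add: A_B_C_def[symmetric])
    ultimately show False by simp
  qed
  have aR: "a \<in> R" by (simp add: R_def hull_inc)
  have ZpR: "Z \<subset> R" using ZR aZ aR by blast
  have nc1: "\<not> collinear {a1, b, c}"
  proof
    assume col: "collinear {a1, b, c}"
    have "cross2 (b - a1) (c - a1) = 0" using col collinear_cross by blast
    then have "det3 (kl a1) (kl b) (kl c) = 0" by (simp add: det_kl a1H H)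
    moreover have "det3 (kl a1) (kl b) (kl c) = k1 * det3 A B C"
      by (simp add: ka1 A1_A2_def A_B_C_def[symmetric])
    ultimately show False using k D0 by simp
  qed
  have cbZ: "convex_body Z"
  proof -
    have "interior (convex hull {a1, b, c}) \<noteq> {}" by (rule convex_body_tri(2)[OF a1H H(2,3) nc1])
    moreover have "convex hull {a1, b, c} \<subseteq> Z" unfolding Z_def by (rule hull_mono) auto
    ultimately have "interior Z \<noteq> {}" using interior_mono by blast
    then show ?thesis unfolding convex_body_def using ZH
      by (auto simp: Z_def intro!: finite_imp_compact_convex_hull convex_convex_hull)
  qed
  have Zc: "compact Z" using cbZ by (simp add: convex_body_def)
  have thZ: "thickness Z \<ge> s"
    unfolding thickness_def
  proof (rule cINF_greatest)
    show "{H. supporting H Z} \<noteq> {}" using exists_supporting[OF cbZ] by blast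
  next
    fix HH assume "HH \<in> {H. supporting H Z}"
    then have sup: "supporting HH Z" by simp
    obtain u0 c0 where uc: "u0 \<noteq> 0" "HH = hl u0 c0" "\<forall>x\<in>Z. inner u0 x \<le> c0" "hl u0 c0 \<inter> Z \<noteq> {}"
      using supporting_hl[OF sup] by blast
    obtain p where p: "p \<in> hl u0 c0" using uc(4) by blast
    have pp: "p \<in> H2" "inner u0 p = c0" using p by (auto simp: hl_def)
    define n where "n = nrm u0 c0"
    have le: "lip (kl v) n \<le> 0" if "v \<in> Z" for v
    proof -
      have "v \<in> H2" using that ZH by auto
      then show ?thesis using uc(3) that rr_pos[of v] by (simp add: n_def lip_kl_nrm divide_le_0_iff)
    qed
    have eq: "lip (kl v) n = 0" if "v \<in> Z" "inner u0 v = c0" for v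
    proof -
      have "v \<in> H2" using that ZH by auto
      then show ?thesis using that by (simp add: n_def lip_kl_nrm)
    qed
    have phv: "phi u0 c0 v = (lip (kl v) n)^2" if "v \<in> Z" for v
      using phi_lip[of v u0 c0] that ZH by (auto simp: n_def)
    have lA1: "lip A1 n \<le> 0" using le[OF vZ(1)] k by (simp add: ka1 mult_le_0_iff)
    have lA2: "lip A2 n \<le> 0" using le[OF vZ(2)] k by (simp add: ka2 mult_le_0_iff)
    have lB: "lip B n \<le> 0" using le[OF vZ(3)] by (simp add: A_B_C_def)
    have lC: "lip C n \<le> 0" using le[OF vZ(4)] by (simp add: A_B_C_def)
    obtain v where v: "v \<in> {a1, a2, b, c}" "inner u0 v = c0"
      using touch[of "{a1, a2, b, c}" u0 c0] uc(3,4) unfolding Z_def by blast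
    have big: "\<exists>z0\<in>Z. phi u0 c0 z0 \<ge> \<sigma> * lip n n"
    proof -
      have s0: "\<sigma> \<ge> 0" using sig by simp
      consider "v = a1" | "v = a2" | "v = b" | "v = c" using v(1) by blast
      then show ?thesis
      proof cases
        case 1
        have "lip A1 n = 0" using eq[OF vZ(1)] v(2) 1 k by (simp add: ka1)
        then have "lip C n \<le> 0 \<and> (lip C n)^2 \<ge> \<sigma> * lip n n"
          using VA[OF u lab(1) D0 e(1) s0 ff(1) conjunct1[OF g], of n] lB lA2 by (simp add: A1_A2_def)
        then show ?thesis using phv[OF vZ(4)] vZ(4) by (intro bexI[of _ c]) (auto simp: A_B_C_def)
      next
        case 2
        have "lip A2 n = 0" using eq[OF vZ(2)] v(2) 2 k by (simp add: ka2)
        moreover have "det3 A C B \<noteq> 0" using D0 dp by simp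
        ultimately have "lip B n \<le> 0 \<and> (lip B n)^2 \<ge> \<sigma> * lip n n"
          using VA[OF u(1,3,2) lab(2) _ e(1) s0 ff(2) conjunct1[OF conjunct2[OF g]], of n] lC lA1
          by (simp add: A1_A2_def)
        then show ?thesis using phv[OF vZ(3)] vZ(3) by (intro bexI[of _ b]) (auto simp: A_B_C_def)
      next
        case 3
        have "lip B n = 0" using eq[OF vZ(3)] v(2) 3 by (simp add: A_B_C_def)
        then have "(lip C n \<le> 0 \<and> (lip C n)^2 \<ge> \<sigma> * lip n n) \<or>
           (lip A2 n \<le> 0 \<and> (lip A2 n)^2 \<ge> (\<sigma> * (- lip A2 A2)) * lip n n)"
          using VB[OF u lab(2) D0 e(1) s0 ff(1) ff(3), of n] g lA1 lC by (simp add: A1_A2_def)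
        then show ?thesis
        proof
          assume "lip C n \<le> 0 \<and> (lip C n)^2 \<ge> \<sigma> * lip n n"
          then show ?thesis using phv[OF vZ(4)] vZ(4) by (intro bexI[of _ c]) (auto simp: A_B_C_def)
        next
          assume h: "lip A2 n \<le> 0 \<and> (lip A2 n)^2 \<ge> (\<sigma> * (- lip A2 A2)) * lip n n"
          have "phi u0 c0 a2 = k2^2 * (lip A2 n)^2" using phv[OF vZ(2)] by (simp add: ka2 power_mult_distrib)
          also have "\<dots> = (lip A2 n)^2 / (- lip A2 A2)" by (simp add: k2sq)
          also have "\<dots> \<ge> \<sigma> * lip n n"
          proof -
            have pos: "- lip A2 A2 > 0" using A2t by simp
            have "(\<sigma> * lip n n) * (- lip A2 A2) \<le> (lip A2 n)^2" using h by (simp add: algebra_simps)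
            then show ?thesis by (simp only: pos_le_divide_eq[OF pos])
          qed
          finally show ?thesis using vZ(2) by blast
        qed
      next
        case 4
        have "lip C n = 0" using eq[OF vZ(4)] v(2) 4 by (simp add: A_B_C_def)
        moreover have "det3 A C B \<noteq> 0" using D0 dp by simp
        ultimately have "(lip B n \<le> 0 \<and> (lip B n)^2 \<ge> \<sigma> * lip n n) \<or>
           (lip A1 n \<le> 0 \<and> (lip A1 n)^2 \<ge> (\<sigma> * (- lip A1 A1)) * lip n n)"
          using VB[OF u(1,3,2) lab(1) _ e(1) s0 ff(2) ff(4), of n] g lA2 lB by (simp add: A1_A2_def)
        then show ?thesis
        proof
          assume "lip B n \<le> 0 \<and> (lip B n)^2 \<ge> \<sigma> * lip n n"
          then show ?thesis using phv[OF vZ(3)] vZ(3) by (intro bexI[of _ b]) (auto simp: A_B_C_def)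
        next
          assume h: "lip A1 n \<le> 0 \<and> (lip A1 n)^2 \<ge> (\<sigma> * (- lip A1 A1)) * lip n n"
          have "phi u0 c0 a1 = k1^2 * (lip A1 n)^2" using phv[OF vZ(1)] by (simp add: ka1 power_mult_distrib)
          also have "\<dots> = (lip A1 n)^2 / (- lip A1 A1)" by (simp add: k1sq)
          also have "\<dots> \<ge> \<sigma> * lip n n"
          proof -
            have pos: "- lip A1 A1 > 0" using A1t by simp
            have "(\<sigma> * lip n n) * (- lip A1 A1) \<le> (lip A1 n)^2" using h by (simp add: algebra_simps)
            then show ?thesis by (simp only: pos_le_divide_eq[OF pos])
          qed
          finally show ?thesis using vZ(1) by blast
        qed
      qed
    qed
    then obtain z0 where z0: "z0 \<in> Z" "phi u0 c0 z0 \<ge> \<sigma> * lip (nrm u0 c0) (nrm u0 c0)"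
      by (auto simp: n_def)
    show "s \<le> hwidth HH Z" unfolding s_def
      by (rule hwidth_ge[OF Zc ZH sup uc(2,1,3) pp z0(1) sig z0(2)])
  qed
  have "thickness Z < thickness R" using red cbZ ZpR by (auto simp: reduced_def R_def)
  then show False using thR thZ by simp
qed




theorem corollary2:
  fixes a b c :: complex
  assumes "htriangle a b c"
    and "reduced (convex hull {a, b, c})"
  shows "regular_triangle a b c"
proof (rule ccontr)
  assume nr: "\<not> regular_triangle a b c"
  have H: "a \<in> H2" "b \<in> H2" "c \<in> H2" using assms(1) by (auto simp: htriangle_def)
  define x z w where "x = - lip (kl a) (kl b)" "z = - lip (kl b) (kl c)" "w = - lip (kl c) (kl a)"
  have w': "- lip (kl a) (kl c) = w" "- lip (kl b) (kl a) = x" "- lip (kl c) (kl b) = z"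
    by (simp_all add: x_z_w_def lip_sym)
  have hd: "hdist a b = arcosh x" "hdist b c = arcosh z" "hdist c a = arcosh w"
    using H by (simp_all add: hdist_kl x_z_w_def)
  have ne: "\<not> (x = z \<and> z = w)" using nr hd by (auto simp: regular_triangle_def)
  define M where "M = max x (max z w)"
  have "z < M \<or> x < M \<or> w < M" unfolding M_def using ne by (auto simp: max_def)
  then consider "z < M" | "x < M" | "w < M" by blast
  then show False
  proof cases
    case 1
    show False
      by (rule main_case[OF assms]) (use 1 in \<open>simp add: M_def x_z_w_def w'\<close>)
  next
    case 2
    have t: "htriangle c a b" using assms(1) by (auto simp: htriangle_def insert_commute)
    have r: "reduced (convex hull {c, a, b})" using assms(2) by (simp add: insert_commute)
    show False
      by (rule main_case[OF t r]) (use 2 in \<open>simp add: M_def x_z_w_def w' max.commute max.left_commute\<close>)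
  next
    case 3
    have t: "htriangle b c a" using assms(1) by (auto simp: htriangle_def insert_commute)
    have r: "reduced (convex hull {b, c, a})" using assms(2) by (simp add: insert_commute)
    show False
      by (rule main_case[OF t r]) (use 3 in \<open>simp add: M_def x_z_w_def w' max.commute max.left_commute\<close>)
  qed
qed


end
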